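(* Let $\mathbb{K}$ be an algebraically closed field of characteristic zero, $\mathcal{C}\subset\mathbb{K}^2$ an affine irreducible plane curve, $A=(a,b)\in\mathbb{K}^2$, $d\in\mathbb{K}\setminus\{0\}$, and assume that $\mathcal{C}_0\neq\emptyset$ and that $\mathcal{C}$ is not a circle centered at $A$. Let $\mathcal{M}$ be an irreducible component of $\mathfrak{C}(\mathcal{C},A,d)$. Then: (1) $\mathcal{M}_0\neq\emptyset$; (2) $\mathcal{C}$ is an irreducible component of $\mathfrak{C}(\mathcal{M},A,d)$; (3) if $d'\in\mathbb{K}\setminus\{0\}$ with $d^2\neq d'^2$ and $\mathcal{M}'$ is an irreducible component of $\mathfrak{C}(\mathcal{M},A,d')$, then $\mathcal{M}'$ is a component of $\mathfrak{C}(\mathcal{C},A,d+d')$ or of $\mathfrak{C}(\mathcal{C},A,d-d')$.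
   Context: For an irreducible plane curve $\mathcal{D}$ defined by an irreducible polynomial $g(y_1,y_2)$, and $\delta\in\mathbb{K}\setminus\{0\}$: $\mathfrak{B}(\mathcal{D},A,\delta)\subset\mathbb{K}^2\times\mathbb{K}^2\times\mathbb{K}$ is the set of $(\bar x,\bar y,w)$ with $g(y_1,y_2)=0$, $(x_1-y_1)^2+(x_2-y_2)^2=\delta^2$, $(y_2-b)(x_1-y_1)-(y_1-a)(x_2-y_2)=0$, $w((y_1-a)^2+(y_2-b)^2)=1$; the conchoid $\mathfrak{C}(\mathcal{D},A,\delta)$ is the Zariski closure in $\mathbb{K}^2$ of the projection of $\mathfrak{B}(\mathcal{D},A,\delta)$ to the $\bar x$ coordinates. $\mathcal{D}_0=\{(p_1,p_2)\in\mathcal{D}:(p_1-a)^2+(p_2-b)^2\neq0\}$. A circle centered at $A$ of radius $r$ is the curve $(y_1-a)^2+(y_2-b)^2=r^2$. *)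

theory Defs
  imports "HOL-Computational_Algebra.Computational_Algebra"
begin

text \<open>Bivariate polynomials K[y1,y2] are represented as K[y1][y2], i.e. as 'a poly poly.\<close>

definition eval2 :: "'a::comm_semiring_1 poly poly \<Rightarrow> 'a \<times> 'a \<Rightarrow> 'a" where
  "eval2 f p = poly (map_poly (\<lambda>c. poly c (fst p)) f) (snd p)"

definition zero_set :: "'a::comm_semiring_1 poly poly \<Rightarrow> ('a \<times> 'a) set" where
  "zero_set f = {p. eval2 f p = 0}"

definition zclosed :: "('a::comm_semiring_1 \<times> 'a) set \<Rightarrow> bool" where
  "zclosed V \<longleftrightarrow> (\<exists>F. V = {p. \<forall>f\<in>F. eval2 f p = 0})"

definition zclosure :: "('a::comm_semiring_1 \<times> 'a) set \<Rightarrow> ('a \<times> 'a) set" where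
  "zclosure S = {p. \<forall>f. (\<forall>q\<in>S. eval2 f q = 0) \<longrightarrow> eval2 f p = 0}"

definition zirreducible :: "('a::comm_semiring_1 \<times> 'a) set \<Rightarrow> bool" where
  "zirreducible V \<longleftrightarrow> zclosed V \<and> V \<noteq> {} \<and>
     (\<forall>V1 V2. zclosed V1 \<and> zclosed V2 \<and> V = V1 \<union> V2 \<longrightarrow> V = V1 \<or> V = V2)"

definition irred_component :: "('a::comm_semiring_1 \<times> 'a) set \<Rightarrow> ('a \<times> 'a) set \<Rightarrow> bool" where
  "irred_component V W \<longleftrightarrow> V \<subseteq> W \<and> zirreducible V \<and>
     (\<forall>V'. zirreducible V' \<and> V \<subseteq> V' \<and> V' \<subseteq> W \<longrightarrow> V' = V)"

definition conchoid_incidence ::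
  "('a::comm_ring_1 \<times> 'a) set \<Rightarrow> 'a \<times> 'a \<Rightarrow> 'a \<Rightarrow> (('a \<times> 'a) \<times> ('a \<times> 'a) \<times> 'a) set" where
  "conchoid_incidence D A \<delta> =
     {((x1, x2), (y1, y2), w). (y1, y2) \<in> D \<and>
        (x1 - y1)^2 + (x2 - y2)^2 = \<delta>^2 \<and>
        (y2 - snd A) * (x1 - y1) - (y1 - fst A) * (x2 - y2) = 0 \<and>
        w * ((y1 - fst A)^2 + (y2 - snd A)^2) = 1}"

definition conchoid :: "('a::comm_ring_1 \<times> 'a) set \<Rightarrow> 'a \<times> 'a \<Rightarrow> 'a \<Rightarrow> ('a \<times> 'a) set" where
  "conchoid D A \<delta> = zclosure (fst ` conchoid_incidence D A \<delta>)"

definition nonisotropic_part :: "('a::comm_ring_1 \<times> 'a) set \<Rightarrow> 'a \<times> 'a \<Rightarrow> ('a \<times> 'a) set" where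
  "nonisotropic_part D A = {p \<in> D. (fst p - fst A)^2 + (snd p - snd A)^2 \<noteq> 0}"

definition circle :: "'a::comm_ring_1 \<times> 'a \<Rightarrow> 'a \<Rightarrow> ('a \<times> 'a) set" where
  "circle A r = {p. (fst p - fst A)^2 + (snd p - snd A)^2 = r^2}"

end

theory Submission
  imports Defs
begin

section \<open>Evaluation\<close>

lemma eval2_alt: "eval2 f (x,y) = poly (poly f [:y:]) x"
  by (induction f) (auto simp: eval2_def map_poly_pCons)

lemma eval2_alt': "eval2 f p = poly (poly f [:snd p:]) (fst p)"
  using eval2_alt[of f "fst p" "snd p"] by simp

lemma eval2_add [simp]: "eval2 (f + g) p = eval2 f p + eval2 g p"
  by (simp add: eval2_alt')
lemma eval2_diff [simp]: "eval2 (f - g) p = eval2 f p - eval2 (g::'a::comm_ring_1 poly poly) p"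
  by (simp add: eval2_alt')
lemma eval2_uminus [simp]: "eval2 (- g) p = - eval2 (g::'a::comm_ring_1 poly poly) p"
  by (simp add: eval2_alt')
lemma eval2_mult [simp]: "eval2 (f * g) p = eval2 f p * eval2 g p"
  by (simp add: eval2_alt')
lemma eval2_1 [simp]: "eval2 1 p = 1"
  by (simp add: eval2_def map_poly_1)
lemma eval2_power [simp]: "eval2 (f ^ n) p = eval2 f p ^ n"
  by (induction n) auto
lemma eval2_const [simp]: "eval2 [:[:c:]:] p = c"
  by (simp add: eval2_alt')
lemma eval2_0 [simp]: "eval2 0 p = 0"
  by (simp add: eval2_alt')
lemma eval2_X1 [simp]: "eval2 [:[:0,1:]:] p = fst p"
  by (simp add: eval2_alt')
lemma eval2_X2 [simp]: "eval2 [:0,1:] p = snd p"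
  by (simp add: eval2_alt')

definition pf :: "('a::comm_ring_1 \<times> 'a \<Rightarrow> 'a) \<Rightarrow> bool" where
  "pf \<phi> \<longleftrightarrow> (\<exists>f. \<phi> = eval2 f)"

lemma pf_eval2 [simp, intro]: "pf (eval2 f)" by (auto simp: pf_def)
lemma pf_const [intro]: "pf (\<lambda>p. c)"
  unfolding pf_def by (rule exI[of _ "[:[:c:]:]"]) auto
lemma pf_fst [intro]: "pf fst"
  unfolding pf_def by (rule exI[of _ "[:[:0,1:]:]"]) auto
lemma pf_snd [intro]: "pf snd"
  unfolding pf_def by (rule exI[of _ "[:0,1:]"]) auto
lemma pf_add [intro]: assumes "pf \<phi>" "pf \<psi>" shows "pf (\<lambda>p. \<phi> p + \<psi> p)"
proof -
  obtain f g where "\<phi> = eval2 f" "\<psi> = eval2 g" using assms by (auto simp: pf_def)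
  then show ?thesis unfolding pf_def by (intro exI[of _ "f+g"]) (auto simp: fun_eq_iff)
qed
lemma pf_mult [intro]: assumes "pf \<phi>" "pf \<psi>" shows "pf (\<lambda>p. \<phi> p * \<psi> p)"
proof -
  obtain f g where "\<phi> = eval2 f" "\<psi> = eval2 g" using assms by (auto simp: pf_def)
  then show ?thesis unfolding pf_def by (intro exI[of _ "f*g"]) (auto simp: fun_eq_iff)
qed
lemma pf_diff [intro]: assumes "pf \<phi>" "pf \<psi>" shows "pf (\<lambda>p. \<phi> p - \<psi> p)"
proof -
  obtain f g where "\<phi> = eval2 f" "\<psi> = eval2 g" using assms by (auto simp: pf_def)
  then show ?thesis unfolding pf_def by (intro exI[of _ "f-g"]) (auto simp: fun_eq_iff)
qed
lemma pf_power [intro]: assumes "pf \<phi>" shows "pf (\<lambda>p. \<phi> p ^ n)"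
proof -
  obtain f where "\<phi> = eval2 f" using assms by (auto simp: pf_def)
  then show ?thesis unfolding pf_def by (intro exI[of _ "f^n"]) (auto simp: fun_eq_iff)
qed

lemma pf_induct:
  fixes P :: "('a::comm_ring_1 \<times> 'a \<Rightarrow> 'a) \<Rightarrow> bool"
  assumes c: "\<And>c. P (\<lambda>p. c)" and x: "P fst" and y: "P snd"
    and a: "\<And>\<phi> \<psi>. P \<phi> \<Longrightarrow> P \<psi> \<Longrightarrow> P (\<lambda>p. \<phi> p + \<psi> p)"
    and m: "\<And>\<phi> \<psi>. P \<phi> \<Longrightarrow> P \<psi> \<Longrightarrow> P (\<lambda>p. \<phi> p * \<psi> p)"
  shows "P (eval2 f)"
proof -
  have inner: "P (\<lambda>p. poly c (fst p))" for c :: "'a poly"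
  proof (induction c)
    case 0 then show ?case using c[of 0] by simp
  next
    case (pCons a c)
    have "P (\<lambda>p. a + fst p * poly c (fst p))"
      by (intro a m c x pCons.IH)
    then show ?case by simp
  qed
  show ?thesis
  proof (induction f)
    case 0 then show ?case using c[of 0] by (simp add: eval2_alt' fun_eq_iff)
  next
    case (pCons a f)
    have e: "eval2 (pCons a f) = (\<lambda>p. poly a (fst p) + snd p * eval2 f p)"
      by (auto simp: eval2_alt' fun_eq_iff)
    show ?case unfolding e by (intro a m inner y pCons.IH)
  qed
qed

lemma pf_cases: "pf \<phi> \<Longrightarrow> (\<And>f. \<phi> = eval2 f \<Longrightarrow> thesis) \<Longrightarrow> thesis"
  unfolding pf_def by blast

section \<open>Zariski basics\<close>

lemma zero_set_iff [simp]: "p \<in> zero_set f \<longleftrightarrow> eval2 f p = 0"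
  by (simp add: zero_set_def)

lemma zclosed_zero_set [intro]: "zclosed (zero_set f)"
  unfolding zclosed_def zero_set_def by (rule exI[of _ "{f}"]) auto

lemma zclosure_sub: "S \<subseteq> zclosure S"
  by (auto simp: zclosure_def)

lemma zclosure_mono: "S \<subseteq> T \<Longrightarrow> zclosure S \<subseteq> zclosure T"
  by (auto simp: zclosure_def)

lemma zclosed_zclosure [intro]: "zclosed (zclosure S)"
  unfolding zclosed_def zclosure_def by (rule exI[of _ "{f. \<forall>q\<in>S. eval2 f q = 0}"]) auto

lemma zclosure_minimal: "S \<subseteq> V \<Longrightarrow> zclosed V \<Longrightarrow> zclosure S \<subseteq> V"
  unfolding zclosed_def zclosure_def by blast

lemma zclosure_closed: "zclosed V \<Longrightarrow> zclosure V = V"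
  using zclosure_minimal zclosure_sub by blast

lemma zclosureD: "p \<in> zclosure S \<Longrightarrow> (\<And>q. q \<in> S \<Longrightarrow> eval2 f q = 0) \<Longrightarrow> eval2 f p = 0"
  by (auto simp: zclosure_def)

lemma zclosureI: "(\<And>f. (\<And>q. q \<in> S \<Longrightarrow> eval2 f q = 0) \<Longrightarrow> eval2 f p = 0) \<Longrightarrow> p \<in> zclosure S"
  by (auto simp: zclosure_def)

lemma zclosure_pf: "p \<in> zclosure S \<Longrightarrow> pf \<phi> \<Longrightarrow> (\<And>q. q \<in> S \<Longrightarrow> \<phi> q = 0) \<Longrightarrow> \<phi> p = 0"
  by (erule pf_cases) (use zclosureD in blast)

lemma zclosed_Un:
  fixes V1 V2 :: "('a::idom \<times> 'a) set"
  assumes "zclosed V1" "zclosed V2" shows "zclosed (V1 \<union> V2)"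
proof -
  obtain F1 F2 where F: "V1 = {p. \<forall>f\<in>F1. eval2 f p = 0}" "V2 = {p. \<forall>f\<in>F2. eval2 f p = 0}"
    using assms unfolding zclosed_def by blast
  have "V1 \<union> V2 = {p. \<forall>h\<in>{f * g |f g. f \<in> F1 \<and> g \<in> F2}. eval2 h p = 0}"
  proof (intro equalityI subsetI)
    fix p assume "p \<in> {p. \<forall>h\<in>{f * g |f g. f \<in> F1 \<and> g \<in> F2}. eval2 h p = 0}"
    then have h0: "\<And>f g. f \<in> F1 \<Longrightarrow> g \<in> F2 \<Longrightarrow> eval2 (f * g) p = 0"
      by blast
    then have h: "\<And>f g. f \<in> F1 \<Longrightarrow> g \<in> F2 \<Longrightarrow> eval2 f p * eval2 g p = 0"
      by simp
    show "p \<in> V1 \<union> V2"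
    proof (rule ccontr)
      assume "p \<notin> V1 \<union> V2"
      then obtain f g where "f \<in> F1" "g \<in> F2" "eval2 f p \<noteq> 0" "eval2 g p \<noteq> 0" unfolding F by auto
      then show False using h by auto
    qed
  qed (auto simp: F)
  then show ?thesis unfolding zclosed_def by blast
qed

lemma zclosed_Int:
  assumes "zclosed V1" "zclosed V2" shows "zclosed (V1 \<inter> V2)"
proof -
  obtain F1 F2 where F: "V1 = {p. \<forall>f\<in>F1. eval2 f p = 0}" "V2 = {p. \<forall>f\<in>F2. eval2 f p = 0}"
    using assms unfolding zclosed_def by blast
  have "V1 \<inter> V2 = {p. \<forall>h\<in>F1 \<union> F2. eval2 h p = 0}"
    unfolding F by auto
  then show ?thesis unfolding zclosed_def by blast
qed

lemma zclosed_empty [intro]: "zclosed ({} :: ('a::comm_ring_1 \<times> 'a) set)"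
  unfolding zclosed_def by (rule exI[of _ "{1}"]) auto

lemma zclosed_singleton [intro]: "zclosed {(a::'a::comm_ring_1, b)}"
proof -
  have "{(a, b)} = {p. \<forall>f\<in>{[:[:-a,1:]:], [:[:-b:],1:]}. eval2 f p = 0}"
    by (auto simp: eval2_alt')
  then show ?thesis unfolding zclosed_def by blast
qed

lemma zclosed_finite: "finite (S :: ('a::idom \<times> 'a) set) \<Longrightarrow> zclosed S"
proof (induction rule: finite_induct)
  case empty then show ?case by auto
next
  case (insert x F)
  have "insert x F = {x} \<union> F" by auto
  then show ?case using insert zclosed_Un[of "{x}" F] by (cases x) auto
qed

lemma zclosure_Un: "zclosure (S \<union> T) = zclosure S \<union> zclosure (T :: ('a::idom \<times> 'a) set)"
proof
  show "zclosure (S \<union> T) \<subseteq> zclosure S \<union> zclosure T"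
    by (rule zclosure_minimal) (use zclosure_sub zclosed_Un in blast)+
  show "zclosure S \<union> zclosure T \<subseteq> zclosure (S \<union> T)"
    by (simp add: zclosure_mono)
qed

lemma zirreducible_sub_Un:
  fixes V :: "('a::idom \<times> 'a) set"
  assumes "zirreducible V" "zclosed V1" "zclosed V2" "V \<subseteq> V1 \<union> V2"
  shows "V \<subseteq> V1 \<or> V \<subseteq> V2"
proof -
  have c: "zclosed V" using assms(1) by (simp add: zirreducible_def)
  have "V = (V \<inter> V1) \<union> (V \<inter> V2)" using assms(4) by auto
  moreover have "zclosed (V \<inter> V1)" "zclosed (V \<inter> V2)" using c assms(2,3) zclosed_Int by auto
  ultimately have "V = V \<inter> V1 \<or> V = V \<inter> V2" using assms(1) unfolding zirreducible_def by blast
  then show ?thesis by blast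
qed

lemma zirreducible_sub_UN:
  fixes V :: "('a::idom \<times> 'a) set"
  assumes "finite I" "zirreducible V" "\<And>i. i \<in> I \<Longrightarrow> zclosed (X i)" "V \<subseteq> (\<Union>i\<in>I. X i)"
  shows "\<exists>i\<in>I. V \<subseteq> X i"
  using assms(1,3,4)
proof (induction rule: finite_induct)
  case empty then show ?case using assms(2) by (auto simp: zirreducible_def)
next
  case (insert j I)
  have cl: "zclosed (\<Union>i\<in>I. X i)"
    using insert.hyps(1) insert.prems(1)
  proof (induction rule: finite_induct)
    case empty then show ?case by auto
  next
    case (insert k J) then show ?case using zclosed_Un[of "X k"] by auto
  qed
  have "V \<subseteq> X j \<union> (\<Union>i\<in>I. X i)" using insert.prems by auto
  then have "V \<subseteq> X j \<or> V \<subseteq> (\<Union>i\<in>I. X i)"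
    using zirreducible_sub_Un[OF assms(2) _ cl] insert.prems(1) by auto
  then show ?case using insert by auto
qed

lemma zirreducible_finite:
  fixes V :: "('a::idom \<times> 'a) set"
  assumes "zirreducible V" "finite V" shows "\<exists>x. V = {x}"
proof -
  obtain x where x: "x \<in> V" using assms by (auto simp: zirreducible_def)
  have "V = {x} \<union> (V - {x})" using x by auto
  moreover have "zclosed {x}" "zclosed (V - {x})" using assms(2) zclosed_finite by auto
  ultimately have "V = {x} \<or> V = V - {x}" using assms(1) unfolding zirreducible_def by blast
  then show ?thesis using x by blast
qed

definition spec :: "'a::comm_semiring_1 \<Rightarrow> 'a poly poly \<Rightarrow> 'a poly" where
  "spec c f = map_poly (\<lambda>q. poly q c) f"

lemma eval2_spec: "eval2 f (c, y) = poly (spec c f) y"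
  by (simp add: eval2_def spec_def)

lemma coeff_spec: "coeff (spec c f) n = poly (coeff f n) c"
  by (simp add: spec_def coeff_map_poly)

lemma spec_add: "spec c (f + g) = spec c f + spec c g"
  by (rule poly_eqI) (simp add: coeff_spec)

lemma spec_mult: "spec c (f * g) = spec c f * spec (c::'a::comm_semiring_1) g"
  by (rule poly_eqI) (simp add: coeff_spec coeff_mult poly_sum)

lemma spec_const: "spec c [:h:] = [:poly h c:]"
  by (cases "h = 0") (auto simp: spec_def map_poly_pCons)

definition L :: "'a \<Rightarrow> 'a::comm_ring_1 poly poly" where "L a = [:[:-a,1:]:]"

lemma L_nz [simp]: "L (a::'a::comm_ring_1) \<noteq> 0" by (simp add: L_def)
lemma degree_L [simp]: "degree (L a) = 0" by (simp add: L_def)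
lemma spec_L [simp]: "spec a (L a) = 0" by (simp add: L_def spec_const)
lemma L_not_unit: "\<not> is_unit (L (a::'a::field))"
  by (simp add: L_def is_unit_poly_iff)

lemma spec_zero_dvd:
  fixes f :: "'a::field poly poly"
  assumes "spec c f = 0" shows "L c dvd f"
proof -
  have "[:-c,1:] dvd coeff f n" for n
    using coeff_spec[of c f n] assms by (simp add: poly_eq_0_iff_dvd)
  then show ?thesis by (simp add: const_poly_dvd_iff L_def)
qed

lemma L_dvd_iff: "L c dvd (f :: 'a::field poly poly) \<longleftrightarrow> spec c f = 0"
  using spec_zero_dvd by (auto simp: spec_mult)

lemma lin_cancel:
  fixes r A B :: "'a::field poly poly"
  assumes "\<not> L a dvd r" "L a * A = B * r" shows "\<exists>B'. A = B' * r"
proof -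
  have "spec a B * spec a r = 0" using arg_cong[OF assms(2), of "spec a"] by (simp add: spec_mult)
  moreover have "spec a r \<noteq> 0" using assms(1) L_dvd_iff by blast
  ultimately have "spec a B = 0" by simp
  then obtain B' where "B = L a * B'" using spec_zero_dvd by blast
  then have "L a * A = L a * (B' * r)" using assms(2) by (simp add: ac_simps)
  then show ?thesis by auto
qed

lemma lin_cancel_mset:
  fixes r A B :: "'a::field poly poly"
  assumes "\<forall>a\<in>#M. \<not> L a dvd r" "(\<Prod>a\<in>#M. L a) * A = B * r" shows "\<exists>B'. A = B' * r"
  using assms
proof (induction M arbitrary: B)
  case empty then show ?case by auto
next
  case (add x M)
  have "L x * ((\<Prod>a\<in>#M. L a) * A) = B * r" using add.prems by (simp add: ac_simps)
  moreover have "\<not> L x dvd r" using add.prems(1) by simp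
  ultimately obtain B1 where "(\<Prod>a\<in>#M. L a) * A = B1 * r" using lin_cancel by blast
  then show ?case using add by auto
qed

lemma decompose_L:
  fixes r :: "'a::field poly poly"
  assumes "r \<noteq> 0" shows "\<exists>D r0. D \<noteq> 0 \<and> r = smult D r0 \<and> (\<forall>a. \<not> L a dvd r0)"
  using assms
proof (induction "degree (lead_coeff r)" arbitrary: r rule: less_induct)
  case (less r)
  show ?case
  proof (cases "\<exists>a. L a dvd r")
    case False
    then show ?thesis by (intro exI[of _ 1] exI[of _ r]) auto
  next
    case True
    then obtain a r1 where r1: "r = L a * r1" by blast
    then have "r1 \<noteq> 0" using less.prems by auto
    have lc: "lead_coeff r = [:-a,1:] * lead_coeff r1"
      using r1 by (simp add: lead_coeff_mult L_def)
    have "lead_coeff r1 \<noteq> 0" using \<open>r1 \<noteq> 0\<close> by simp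
    then have "degree (lead_coeff r) = 1 + degree (lead_coeff r1)"
      unfolding lc by (subst degree_mult_eq) auto
    then obtain D r0 where D: "D \<noteq> 0" "r1 = smult D r0" "\<forall>a. \<not> L a dvd r0"
      using less.hyps[of r1] \<open>r1 \<noteq> 0\<close> by auto
    have "r = smult ([:-a,1:] * D) r0"
      using r1 D by (simp add: L_def)
    moreover have "[:-a,1:] * D \<noteq> 0"
    proof -
      have "[:-a,1:] \<noteq> (0::'a poly)" by simp
      then show ?thesis using D(1) by (metis mult_eq_0_iff)
    qed
    ultimately show ?thesis using D by blast
  qed
qed

lemma const_mult_poly: "[:a * b:] = [:a:] * [:b::'a::comm_ring_1:]"
  by simp

lemma prod_L_const: "[:\<Prod>x\<in>#A. [:-x, 1:]:] = (\<Prod>x\<in>#A. L (x::'a::comm_ring_1))"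
proof (induction A)
  case empty then show ?case by simp
next
  case (add x A)
  have "[:\<Prod>x\<in>#add_mset x A. [:-x, 1:]:] = [:[:-x, 1:] * (\<Prod>x\<in>#A. [:-x, 1:]):]" by simp
  also have "\<dots> = L x * [:\<Prod>x\<in>#A. [:-x, 1:]:]" unfolding L_def by (rule const_mult_poly)
  finally show ?case using add by simp
qed

lemma ideal_const:
  fixes p g :: "'a::alg_closed_field poly poly"
  assumes irr: "irreducible p" and deg: "degree p > 0" and nd: "\<not> p dvd g"
  shows "\<exists>U V h. h \<noteq> 0 \<and> U * p + V * g = [:h:]"
proof -
  define I where "I = {U * p + V * g | U V. True}"
  have pI: "p \<in> I" unfolding I_def by (rule CollectI, rule exI[of _ 1], rule exI[of _ 0]) simp
  have gI: "g \<in> I" unfolding I_def by (rule CollectI, rule exI[of _ 0], rule exI[of _ 1]) simp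
  have comb: "smult c f - r * q \<in> I" if fI: "f \<in> I" and rI: "r \<in> I" for f r q c
  proof -
    obtain U1 V1 where "f = U1 * p + V1 * g" using fI unfolding I_def by blast
    moreover obtain U2 V2 where "r = U2 * p + V2 * g" using rI unfolding I_def by blast
    ultimately have "smult c f - r * q = (smult c U1 - U2 * q) * p + (smult c V1 - V2 * q) * g"
      by (simp add: algebra_simps smult_add_right)
    then show ?thesis unfolding I_def by blast
  qed
  have "g \<noteq> 0" using nd by auto
  obtain r where r: "r \<in> I" "r \<noteq> 0" and rmin: "\<And>s. s \<in> I \<Longrightarrow> s \<noteq> 0 \<Longrightarrow> degree r \<le> degree s"
    using ex_has_least_nat[of "\<lambda>s. s \<in> I \<and> s \<noteq> 0" g degree] gI \<open>g \<noteq> 0\<close> by blast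
  show ?thesis
  proof (cases "degree r = 0")
    case True
    then obtain h where "r = [:h:]" by (auto elim: degree_eq_zeroE)
    moreover obtain U V where "r = U * p + V * g" using r(1) unfolding I_def by blast
    moreover have "h \<noteq> 0" using r(2) calculation(1) by auto
    ultimately show ?thesis by metis
  next
    case False
    obtain D r0 where D: "D \<noteq> 0" "r = smult D r0" "\<forall>a. \<not> L a dvd r0"
      using decompose_L[OF r(2)] by blast
    have degr0: "degree r0 = degree r" using D by simp
    have key: "\<exists>B. f = B * r0" if "f \<in> I" for f
    proof -
      obtain q s where qs: "pseudo_divmod f r = (q, s)" by (cases "pseudo_divmod f r")
      define k where "k = Suc (degree f) - degree r"
      have e: "smult (lead_coeff r ^ k) f = r * q + s" and sd: "s = 0 \<or> degree s < degree r"
        using pseudo_divmod[OF r(2) qs] by (simp_all add: k_def)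
      have "s = smult (lead_coeff r ^ k) f - r * q" using e by (simp add: algebra_simps)
      then have "s \<in> I" using comb[OF that r(1)] by simp
      then have "s = 0" using sd rmin by force
      have lcnz: "lead_coeff r ^ k \<noteq> 0" using r(2) by simp
      obtain A where A: "lead_coeff r ^ k = smult (lead_coeff (lead_coeff r ^ k)) (\<Prod>x\<in>#A. [:-x, 1:])"
        using alg_closed_imp_factorization[OF lcnz] by blast
      define c0 where "c0 = lead_coeff (lead_coeff r ^ k)"
      have "c0 \<noteq> 0" using lcnz by (simp add: c0_def)
      have "smult (lead_coeff r ^ k) f = [:[:c0:]:] * ((\<Prod>x\<in>#A. L x) * f)"
        using A unfolding c0_def[symmetric] prod_L_const[symmetric]
        by (metis (no_types, lifting) mult.assoc mult_smult_left smult_one smult_smult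
            mult_1 pCons_0_0 pCons_one)
      also have "smult (lead_coeff r ^ k) f = r * q" using e \<open>s = 0\<close> by simp
      finally have "(\<Prod>x\<in>#A. L x) * f = ([:[:inverse c0:]:] * q * [:D:]) * r0"
        using \<open>c0 \<noteq> 0\<close> D(2)
        by (metis (no_types, lifting) mult.assoc mult.commute mult.left_neutral mult_smult_left
            smult_smult field_class.field_inverse pCons_0_0 pCons_one smult_one)
      then show ?thesis using lin_cancel_mset D(3) by blast
    qed
    obtain Bp where Bp: "p = Bp * r0" using key pI by blast
    have "\<not> is_unit r0" using degr0 False by (auto simp: is_unit_poly_iff)
    then have "is_unit Bp" using irreducibleD[OF irr Bp] by blast
    then obtain u where u: "Bp * u = 1" by (metis dvdE)
    have "r0 = p * u" using Bp u by (metis mult.commute mult.left_commute mult_1)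
    obtain Bg where "g = Bg * r0" using key gI by blast
    then have "p dvd g" using \<open>r0 = p * u\<close> by simp
    then show ?thesis using nd by simp
  qed
qed

lemma spec_degree:
  fixes f :: "'a::field poly poly"
  assumes "poly (lead_coeff f) c \<noteq> 0" shows "degree (spec c f) = degree f"
  unfolding spec_def by (rule map_poly_degree_eq) (use assms in simp)

lemma eval2_pCons0: "eval2 [:h:] p = poly h (fst p)"
  by (simp add: eval2_alt')

lemma finite_common_zeros:
  fixes p g :: "'a::alg_closed_field poly poly"
  assumes irr: "irreducible p" and nd: "\<not> p dvd g"
  shows "finite (zero_set p \<inter> zero_set g)"
proof (cases "degree p = 0")
  case True
  then obtain p0 where p0: "p = [:p0:]" by (auto elim: degree_eq_zeroE)
  have irr0: "irreducible p0" using irr p0 irreducible_const_poly_iff by blast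
  then have "p0 \<noteq> 0" by auto
  have fin: "finite {c. poly p0 c = 0}" using \<open>p0 \<noteq> 0\<close> poly_roots_finite by blast
  have nz: "spec c g \<noteq> 0" if "poly p0 c = 0" for c
  proof
    assume "spec c g = 0"
    then have d1: "L c dvd g" by (rule spec_zero_dvd)
    have "[:-c,1:] dvd p0" using that by (simp add: poly_eq_0_iff_dvd)
    then obtain h where h: "p0 = [:-c,1:] * h" by blast
    have "\<not> is_unit [:-c,1:]" by (simp add: is_unit_poly_iff)
    then have "is_unit h" using irr0 h irreducibleD by blast
    then have "p0 dvd [:-c,1:]" using h by (metis dvd_mult_unit_iff dvd_refl)
    then have "[:p0:] dvd L c" by (simp add: const_poly_dvd_iff coeff_pCons L_def split: nat.split)
    then have "p dvd g" using d1 p0 dvd_trans by blast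
    then show False using nd by simp
  qed
  have "zero_set p \<inter> zero_set g \<subseteq> (\<Union>c\<in>{c. poly p0 c = 0}. (\<lambda>y. (c, y)) ` {y. poly (spec c g) y = 0})"
  proof
    fix q assume q: "q \<in> zero_set p \<inter> zero_set g"
    obtain x y where [simp]: "q = (x, y)" by (cases q)
    have "poly p0 x = 0" using q p0 by (simp add: eval2_pCons0)
    moreover have "poly (spec x g) y = 0" using q by (simp add: eval2_spec)
    ultimately show "q \<in> (\<Union>c\<in>{c. poly p0 c = 0}. (\<lambda>y. (c, y)) ` {y. poly (spec c g) y = 0})" by auto
  qed
  moreover have "finite (\<Union>c\<in>{c. poly p0 c = 0}. (\<lambda>y. (c, y)) ` {y. poly (spec c g) y = 0})"
    using fin nz poly_roots_finite by blast
  ultimately show ?thesis by (rule finite_subset)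
next
  case False
  obtain U V h where bez: "h \<noteq> 0" "U * p + V * g = [:h:]"
    using ideal_const[OF irr _ nd] False by blast
  have fin: "finite {c. poly h c = 0}" using \<open>h \<noteq> 0\<close> poly_roots_finite by blast
  have nz: "spec c p \<noteq> 0" for c
  proof
    assume "spec c p = 0"
    then obtain p' where p': "p = L c * p'" using spec_zero_dvd by blast
    then have "is_unit p'" using irreducibleD[OF irr p'] L_not_unit by blast
    then have "degree p' = 0" by (auto simp: is_unit_poly_iff)
    then have "degree p = 0" using p' by (metis L_nz degree_L degree_mult_eq add_0 mult_eq_0_iff)
    then show False using False by simp
  qed
  have "zero_set p \<inter> zero_set g \<subseteq> (\<Union>c\<in>{c. poly h c = 0}. (\<lambda>y. (c, y)) ` {y. poly (spec c p) y = 0})"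
  proof
    fix q assume q: "q \<in> zero_set p \<inter> zero_set g"
    obtain x y where [simp]: "q = (x, y)" by (cases q)
    have "eval2 [:h:] q = 0" using q arg_cong[OF bez(2), of "\<lambda>f. eval2 f q"] by simp
    then have "poly h x = 0" by (simp add: eval2_pCons0)
    moreover have "poly (spec x p) y = 0" using q by (simp add: eval2_spec)
    ultimately show "q \<in> (\<Union>c\<in>{c. poly h c = 0}. (\<lambda>y. (c, y)) ` {y. poly (spec c p) y = 0})" by auto
  qed
  moreover have "finite (\<Union>c\<in>{c. poly h c = 0}. (\<lambda>y. (c, y)) ` {y. poly (spec c p) y = 0})"
    using fin nz poly_roots_finite by blast
  ultimately show ?thesis by (rule finite_subset)
qed

lemma infinite_zero_set:
  fixes p :: "'a::{alg_closed_field, field_char_0} poly poly"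
  assumes irr: "irreducible p"
  shows "infinite (zero_set p)"
proof (cases "degree p = 0")
  case True
  then obtain p0 where p0: "p = [:p0:]" by (auto elim: degree_eq_zeroE)
  have irr0: "irreducible p0" using irr p0 irreducible_const_poly_iff by blast
  have "degree p0 > 0"
  proof (rule ccontr)
    assume "\<not> degree p0 > 0"
    then obtain c where "p0 = [:c:]" by (auto elim: degree_eq_zeroE)
    moreover have "p0 \<noteq> 0" using irr0 by auto
    ultimately have "is_unit p0" by (simp add: is_unit_poly_iff dvd_field_iff)
    then show False using irr0 irreducible_not_unit by blast
  qed
  then obtain c where c: "poly p0 c = 0" using alg_closed_imp_poly_has_root by blast
  have "(\<lambda>y. (c, y)) ` UNIV \<subseteq> zero_set p" using c p0 by (auto simp: eval2_pCons0)
  moreover have "inj (\<lambda>y::'a. (c, y))" by (rule injI) simp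
  then have "infinite ((\<lambda>y. (c, y)) ` (UNIV :: 'a set))"
    using infinite_UNIV_char_0 finite_imageD by blast
  ultimately show ?thesis by (meson infinite_super)
next
  case False
  define l where "l = lead_coeff p"
  have "p \<noteq> 0" using irr by auto
  then have "l \<noteq> 0" by (simp add: l_def)
  have "infinite (UNIV - {x. poly l x = 0})"
    by (rule Diff_infinite_finite[OF poly_roots_finite[OF \<open>l \<noteq> 0\<close>] infinite_UNIV_char_0])
  moreover have "UNIV - {x. poly l x = 0} \<subseteq> fst ` zero_set p"
  proof
    fix x assume "x \<in> UNIV - {x. poly l x = 0}"
    then have "poly (lead_coeff p) x \<noteq> 0" using l_def by simp
    then have "degree (spec x p) = degree p" by (rule spec_degree)
    then have "degree (spec x p) > 0" using False by simp
    then obtain y where "poly (spec x p) y = 0" using alg_closed_imp_poly_has_root by blast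
    then have "(x, y) \<in> zero_set p" by (simp add: eval2_spec)
    then show "x \<in> fst ` zero_set p" by (rule rev_image_eqI) simp
  qed
  ultimately have "infinite (fst ` zero_set p)" by (meson infinite_super)
  then show ?thesis using finite_imageI by blast
qed

lemma vanish_dvd:
  fixes p g :: "'a::{alg_closed_field, field_char_0} poly poly"
  assumes irr: "irreducible p" and S: "S \<subseteq> zero_set p" "infinite S" and van: "\<And>q. q \<in> S \<Longrightarrow> eval2 g q = 0"
  shows "p dvd g"
proof (rule ccontr)
  assume "\<not> p dvd g"
  then have "finite (zero_set p \<inter> zero_set g)" using finite_common_zeros irr by blast
  moreover have "S \<subseteq> zero_set p \<inter> zero_set g" using S van by auto
  ultimately show False using S(2) finite_subset by blast
qed

lemma dense_curve:
  fixes p :: "'a::{alg_closed_field, field_char_0} poly poly"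
  assumes irr: "irreducible p" and S: "S \<subseteq> zero_set p" "infinite S"
  shows "zclosure S = zero_set p"
proof
  show "zclosure S \<subseteq> zero_set p" using S by (intro zclosure_minimal) auto
  show "zero_set p \<subseteq> zclosure S"
  proof
    fix q assume q: "q \<in> zero_set p"
    show "q \<in> zclosure S"
    proof (rule zclosureI)
      fix f assume "\<And>q. q \<in> S \<Longrightarrow> eval2 f q = 0"
      then have "p dvd f" using vanish_dvd[OF irr S] by blast
      then obtain h where "f = p * h" by blast
      then show "eval2 f q = 0" using q by simp
    qed
  qed
qed

lemma curve_closed_infinite_sub:
  fixes p :: "'a::{alg_closed_field, field_char_0} poly poly"
  assumes irr: "irreducible p" and V: "zclosed V" "V \<subseteq> zero_set p" "infinite V"
  shows "zero_set p = V"
proof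
  show "V \<subseteq> zero_set p" by fact
  obtain F where F: "V = {q. \<forall>f\<in>F. eval2 f q = 0}" using V(1) unfolding zclosed_def by blast
  show "zero_set p \<subseteq> V"
  proof
    fix q assume q: "q \<in> zero_set p"
    have "eval2 f q = 0" if fF: "f \<in> F" for f
    proof -
      have "\<And>q. q \<in> V \<Longrightarrow> eval2 f q = 0" using F fF by blast
      then have "p dvd f" using vanish_dvd[OF irr V(2,3)] by blast
      then obtain h where "f = p * h" by blast
      then show ?thesis using q by simp
    qed
    then show "q \<in> V" using F by blast
  qed
qed

lemma zirreducible_curve:
  fixes p :: "'a::{alg_closed_field, field_char_0} poly poly"
  assumes irr: "irreducible p"
  shows "zirreducible (zero_set p)"
  unfolding zirreducible_def
proof (intro conjI allI impI)
  show "zclosed (zero_set p)" by auto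
  show "zero_set p \<noteq> {}" using infinite_zero_set[OF irr] by auto
  fix V1 V2 assume H: "zclosed V1 \<and> zclosed V2 \<and> zero_set p = V1 \<union> V2"
  then have c1: "zclosed V1" and c2: "zclosed V2" and e: "zero_set p = V1 \<union> V2" by blast+
  have inf: "infinite (V1 \<union> V2)" using infinite_zero_set[OF irr] unfolding e .
  have s1: "V1 \<subseteq> zero_set p" and s2: "V2 \<subseteq> zero_set p" unfolding e by blast+
  show "zero_set p = V1 \<or> zero_set p = V2"
  proof (cases "finite V1")
    case False then show ?thesis using curve_closed_infinite_sub[OF irr c1 s1] by blast
  next
    case True
    then have "infinite V2" using inf by simp
    then show ?thesis using curve_closed_infinite_sub[OF irr c2 s2] by blast
  qed
qed

definition msize :: "'a::zero poly poly \<Rightarrow> nat" where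
  "msize f = degree f + degree (lead_coeff f)"

lemma msize_mult:
  fixes f g :: "'a::field poly poly"
  assumes "f \<noteq> 0" "g \<noteq> 0" shows "msize (f * g) = msize f + msize g"
proof -
  have "lead_coeff (f * g) = lead_coeff f * lead_coeff g" by (rule lead_coeff_mult)
  moreover have "lead_coeff f \<noteq> 0" "lead_coeff g \<noteq> 0" using assms by auto
  ultimately have "degree (lead_coeff (f * g)) = degree (lead_coeff f) + degree (lead_coeff g)"
    by (simp add: degree_mult_eq)
  then show ?thesis using assms by (simp add: msize_def degree_mult_eq)
qed

lemma msize_0_unit:
  fixes f :: "'a::field poly poly"
  assumes "f \<noteq> 0" "msize f = 0" shows "is_unit f"
proof -
  have "degree f = 0" "degree (lead_coeff f) = 0" using assms by (auto simp: msize_def)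
  then obtain c where "f = [:c:]" by (auto elim: degree_eq_zeroE)
  then show ?thesis using assms \<open>degree (lead_coeff f) = 0\<close>
    by (auto simp: is_unit_poly_iff dvd_field_iff elim!: degree_eq_zeroE)
qed

lemma sub_irreducible_factor:
  fixes H :: "'a::{alg_closed_field, field_char_0} poly poly"
  assumes "H \<noteq> 0" "zirreducible V" "V \<subseteq> zero_set H" "infinite V"
  shows "\<exists>p. irreducible p \<and> p dvd H \<and> V \<subseteq> zero_set p"
  using assms(1,3)
proof (induction "msize H" arbitrary: H rule: less_induct)
  case (less H)
  show ?case
  proof (cases "irreducible H")
    case True then show ?thesis using less.prems by auto
  next
    case False
    have "\<not> is_unit H"
    proof
      assume "is_unit H"
      then obtain c where "H = [:c:]" "is_unit c" by (auto simp: is_unit_poly_iff)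
      then obtain c0 where "H = [:[:c0:]:]" "c0 dvd 1" by (auto simp: is_unit_poly_iff)
      then have "zero_set H = {}" by auto
      then show False using less.prems assms(4) by auto
    qed
    then obtain a b where ab: "H = a * b" "\<not> is_unit a" "\<not> is_unit b"
      using False less.prems(1) unfolding irreducible_def by auto
    have nz: "a \<noteq> 0" "b \<noteq> 0" using ab(1) less.prems(1) by auto
    have "msize a \<noteq> 0" using msize_0_unit[OF nz(1)] ab(2) by blast
    moreover have "msize b \<noteq> 0" using msize_0_unit[OF nz(2)] ab(3) by blast
    ultimately have lt: "msize a < msize H" "msize b < msize H" using msize_mult[OF nz] ab(1) by simp_all
    have "V \<subseteq> zero_set a \<union> zero_set b" using less.prems(2) ab(1) by (auto simp: subset_iff)
    then have "V \<subseteq> zero_set a \<or> V \<subseteq> zero_set b"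
      using zirreducible_sub_Un[OF assms(2)] by blast
    then show ?thesis
    proof
      assume "V \<subseteq> zero_set a"
      then obtain p where "irreducible p" "p dvd a" "V \<subseteq> zero_set p" using less.hyps[OF lt(1)] nz by blast
      then show ?thesis using ab(1) dvd_mult2 by blast
    next
      assume "V \<subseteq> zero_set b"
      then obtain p where "irreducible p" "p dvd b" "V \<subseteq> zero_set p" using less.hyps[OF lt(2)] nz by blast
      then show ?thesis using ab(1) dvd_mult by blast
    qed
  qed
qed

lemma classify_irreducible:
  fixes H :: "'a::{alg_closed_field, field_char_0} poly poly"
  assumes "H \<noteq> 0" "zirreducible V" "V \<subseteq> zero_set H" "infinite V"
  shows "\<exists>p. irreducible p \<and> V = zero_set p"
proof -
  obtain p where p: "irreducible p" "V \<subseteq> zero_set p" using sub_irreducible_factor[OF assms] by blast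
  have "zclosed V" using assms(2) by (simp add: zirreducible_def)
  then have "zero_set p = V" using curve_closed_infinite_sub[OF p(1) _ p(2) assms(4)] by blast
  then show ?thesis using p by blast
qed

lemma curve_sub_eq:
  fixes p q :: "'a::{alg_closed_field, field_char_0} poly poly"
  assumes "irreducible p" "irreducible q" "zero_set q \<subseteq> zero_set p"
  shows "zero_set p = zero_set q"
proof -
  have "q dvd p" using vanish_dvd[OF assms(2) order.refl infinite_zero_set[OF assms(2)], of p] assms(3) by (auto simp: subset_iff)
  then obtain h where h: "p = q * h" by blast
  have "\<not> is_unit q" using assms(2) irreducible_not_unit by blast
  then have "is_unit h" using irreducibleD[OF assms(1) h] by blast
  then obtain k where "h * k = 1" by (metis dvdE)
  then have "q = p * k" using h by (metis mult.assoc mult_1_right)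
  then have "zero_set p \<subseteq> zero_set q" by auto
  then show ?thesis using assms(3) by blast
qed

lemma component_curve:
  fixes q H :: "'a::{alg_closed_field, field_char_0} poly poly"
  assumes "irreducible q" "zero_set q \<subseteq> W" "W \<subseteq> zero_set H" "H \<noteq> 0"
  shows "irred_component (zero_set q) W"
  unfolding irred_component_def
proof (intro conjI allI impI)
  show "zero_set q \<subseteq> W" by fact
  show "zirreducible (zero_set q)" using zirreducible_curve[OF assms(1)] .
  fix V' assume V': "zirreducible V' \<and> zero_set q \<subseteq> V' \<and> V' \<subseteq> W"
  have "infinite V'" using V' infinite_zero_set[OF assms(1)] finite_subset by blast
  then obtain p where p: "irreducible p" "V' = zero_set p"
    using classify_irreducible[OF assms(4), of V'] V' assms(3) by blast
  then show "V' = zero_set q" using curve_sub_eq[OF p(1) assms(1)] V' by auto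
qed

definition NN :: "'a::comm_ring_1 \<times> 'a \<Rightarrow> 'a \<times> 'a \<Rightarrow> 'a" where
  "NN A p = (fst p - fst A)^2 + (snd p - snd A)^2"

definition Q :: "'a::comm_ring_1 \<times> 'a \<Rightarrow> 'a \<Rightarrow> 'a \<times> 'a \<Rightarrow> 'a \<times> 'a \<Rightarrow> bool" where
  "Q A \<delta> x y \<longleftrightarrow> (fst x - fst y)^2 + (snd x - snd y)^2 = \<delta>^2 \<and>
     (snd y - snd A) * (fst x - fst y) - (fst y - fst A) * (snd x - snd y) = 0"

definition PP :: "('a::comm_ring_1 \<times> 'a) set \<Rightarrow> 'a \<times> 'a \<Rightarrow> 'a \<Rightarrow> ('a \<times> 'a) set" where
  "PP D A \<delta> = {x. \<exists>y\<in>D. NN A y \<noteq> 0 \<and> Q A \<delta> x y}"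

definition pt :: "'a::comm_ring_1 \<times> 'a \<Rightarrow> 'a \<times> 'a \<Rightarrow> 'a \<Rightarrow> 'a \<times> 'a" where
  "pt A y t = (fst y + t * (fst y - fst A), snd y + t * (snd y - snd A))"

lemma PP_iff: "x \<in> PP D A \<delta> \<longleftrightarrow> (\<exists>y\<in>D. NN A y \<noteq> 0 \<and> Q A \<delta> x y)"
  by (simp add: PP_def)

lemma PP_mono: "D \<subseteq> D' \<Longrightarrow> PP D A \<delta> \<subseteq> PP D' A \<delta>"
  by (auto simp: PP_def)

lemma conchoid_PP: "conchoid D A (\<delta>::'a::field) = zclosure (PP D A \<delta>)"
proof -
  have "fst ` conchoid_incidence D A \<delta> = PP D A \<delta>"
  proof (intro equalityI subsetI)
    fix x assume "x \<in> fst ` conchoid_incidence D A \<delta>"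
    then obtain y w where "(x, y, w) \<in> conchoid_incidence D A \<delta>" by force
    then have "y \<in> D \<and> NN A y \<noteq> 0 \<and> Q A \<delta> x y"
      by (cases x, cases y) (auto simp: conchoid_incidence_def NN_def Q_def)
    then show "x \<in> PP D A \<delta>" by (auto simp: PP_def)
  next
    fix x assume "x \<in> PP D A \<delta>"
    then obtain y where y: "y \<in> D" "NN A y \<noteq> 0" "Q A \<delta> x y" by (auto simp: PP_def)
    then have "(x, y, inverse (NN A y)) \<in> conchoid_incidence D A \<delta>"
      by (cases x, cases y) (auto simp: conchoid_incidence_def NN_def Q_def)
    then show "x \<in> fst ` conchoid_incidence D A \<delta>" by force
  qed
  then show ?thesis by (simp add: conchoid_def)
qed

lemma NN_pt: "NN A (pt A y t) = (1 + t)^2 * NN A y"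
  by (simp add: NN_def pt_def power2_eq_square algebra_simps)

lemma Q_sym: "Q A \<delta> x y \<longleftrightarrow> Q A \<delta> y x"
proof -
  have "(snd x - snd A) * (fst y - fst x) - (fst x - fst A) * (snd y - snd x) =
        - ((snd y - snd A) * (fst x - fst y) - (fst y - fst A) * (snd x - snd y))"
    by (simp add: algebra_simps)
  moreover have "(fst x - fst y)^2 + (snd x - snd y)^2 = (fst y - fst x)^2 + (snd y - snd x)^2"
    by (simp add: power2_commute)
  ultimately show ?thesis unfolding Q_def by auto
qed

lemma Q_pt: "Q A \<delta> (pt A y t) y \<longleftrightarrow> t^2 * NN A y = \<delta>^2"
  by (simp add: Q_def pt_def NN_def power2_eq_square algebra_simps)

lemma par_t:
  fixes A x y :: "'a::field \<times> 'a"
  assumes "y \<noteq> A"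
  shows "Q A \<delta> x y \<longleftrightarrow> (\<exists>t. x = pt A y t \<and> t^2 * NN A y = \<delta>^2)"
proof
  assume q: "Q A \<delta> x y"
  define v1 v2 u1 u2 where "v1 = fst y - fst A" "v2 = snd y - snd A" "u1 = fst x - fst y" "u2 = snd x - snd y"
  have cr: "v2 * u1 = v1 * u2" using q unfolding Q_def v1_v2_u1_u2_def by simp
  have "\<exists>t. u1 = t * v1 \<and> u2 = t * v2"
  proof (cases "v1 = 0")
    case True
    then have "v2 \<noteq> 0" using assms unfolding v1_v2_u1_u2_def by (auto simp: prod_eq_iff)
    then have "u1 = 0" using cr True by simp
    then show ?thesis using True \<open>v2 \<noteq> 0\<close> by (intro exI[of _ "u2 / v2"]) simp
  next
    case False
    then have "u2 = u1 / v1 * v2" using cr by (simp add: field_simps)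
    then show ?thesis using False by (intro exI[of _ "u1 / v1"]) simp
  qed
  then obtain t where t: "u1 = t * v1" "u2 = t * v2" by blast
  have "x = pt A y t" using t unfolding pt_def v1_v2_u1_u2_def by (simp add: prod_eq_iff algebra_simps)
  then show "\<exists>t. x = pt A y t \<and> t^2 * NN A y = \<delta>^2" using q Q_pt by blast
next
  assume "\<exists>t. x = pt A y t \<and> t^2 * NN A y = \<delta>^2"
  then show "Q A \<delta> x y" using Q_pt by blast
qed

lemma NN_nz_neq: "NN A y \<noteq> 0 \<Longrightarrow> y \<noteq> A"
  by (auto simp: NN_def)

lemma par_r:
  fixes A x y :: "'a::field \<times> 'a"
  assumes "NN A y \<noteq> 0" "\<delta> \<noteq> 0" "Q A \<delta> x y"
  shows "\<exists>r. r^2 = NN A y \<and> x = pt A y (\<delta> / r)"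
proof -
  obtain t where t: "x = pt A y t" "t^2 * NN A y = \<delta>^2" using par_t assms NN_nz_neq by blast
  have "t \<noteq> 0" using t(2) assms(2) by auto
  have "(\<delta> / t)^2 = NN A y" using t(2) \<open>t \<noteq> 0\<close> by (simp add: field_simps power2_eq_square)
  moreover have "\<delta> / (\<delta> / t) = t" using \<open>t \<noteq> 0\<close> assms(2) by simp
  ultimately show ?thesis using t(1) by metis
qed

lemma Q_pt_r:
  fixes A y :: "'a::field \<times> 'a"
  assumes "r^2 = NN A y" "NN A y \<noteq> 0"
  shows "Q A \<delta> (pt A y (\<delta> / r)) y"
proof -
  have "r \<noteq> 0" using assms by auto
  then show ?thesis unfolding Q_pt using assms(1)[symmetric] by (simp add: field_simps power2_eq_square)
qed

lemma isotropic_PP: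
  fixes A :: "'a::field \<times> 'a"
  assumes "x \<in> PP D A \<delta>" "NN A x = 0" shows "x = A"
proof -
  obtain y where y: "y \<in> D" "NN A y \<noteq> 0" "Q A \<delta> x y" using assms(1) by (auto simp: PP_def)
  then obtain t where t: "x = pt A y t" using par_t NN_nz_neq by blast
  have "(1 + t)^2 = 0" using assms(2) y(2) NN_pt[of A y t] t by simp
  then have "t = -1" by (simp add: add_eq_0_iff)
  then show ?thesis using t by (simp add: pt_def prod_eq_iff)
qed

lemma Q_comp:
  fixes A x y z :: "'a::field \<times> 'a"
  assumes "NN A y \<noteq> 0" "Q A d x y" "NN A x \<noteq> 0" "Q A d' z x"
  shows "Q A (d + d') z y \<or> Q A (d - d') z y"
proof -
  obtain t where t: "x = pt A y t" "t^2 * NN A y = d^2" using par_t assms(1,2) NN_nz_neq by blast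
  obtain s where s: "z = pt A x s" "s^2 * NN A x = d'^2" using par_t assms(3,4) NN_nz_neq by blast
  define T where "T = t + s * (1 + t)"
  have z: "z = pt A y T" unfolding s(1) t(1) pt_def T_def by (simp add: algebra_simps)
  have s2: "s^2 * (1 + t)^2 * NN A y = d'^2" using s(2) t(1) NN_pt[of A y t] by (simp add: ac_simps)
  have "(t * s * (1 + t) * NN A y)^2 = (d * d')^2"
  proof -
    have "(t * s * (1 + t) * NN A y)^2 = (t^2 * NN A y) * (s^2 * (1 + t)^2 * NN A y)"
      by (simp add: power2_eq_square algebra_simps)
    then show ?thesis using t(2) s2 by (simp add: power_mult_distrib)
  qed
  then have P: "t * s * (1 + t) * NN A y = d * d' \<or> t * s * (1 + t) * NN A y = - (d * d')"
    using power2_eq_iff by blast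
  have e0: "T^2 * NN A y = t^2 * NN A y + s^2 * (1 + t)^2 * NN A y + 2 * (t * s * (1 + t) * NN A y)"
    by (simp add: T_def power2_eq_square algebra_simps)
  then have e: "T^2 * NN A y = d^2 + d'^2 + 2 * (t * s * (1 + t) * NN A y)"
    by (simp only: t(2) s2)
  have "T^2 * NN A y = (d + d')^2 \<or> T^2 * NN A y = (d - d')^2"
    using P
  proof
    assume "t * s * (1 + t) * NN A y = d * d'"
    then show ?thesis using e by (simp add: power2_sum)
  next
    assume "t * s * (1 + t) * NN A y = - (d * d')"
    then show ?thesis using e by (simp add: power2_diff)
  qed
  then show ?thesis using z Q_pt by metis
qed

section \<open>Good functions\<close>

lemma pf_NN [intro]: "pf (NN (A::'a::comm_ring_1 \<times> 'a))"
proof -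
  have "pf (\<lambda>p. (fst p - fst A)^2 + (snd p - snd A)^2)" by (intro pf_add pf_power pf_diff pf_fst pf_snd pf_const)
  then show ?thesis by (simp add: NN_def[abs_def])
qed

definition good :: "'a::field \<times> 'a \<Rightarrow> 'a \<Rightarrow> ('a \<times> 'a \<Rightarrow> 'a) \<Rightarrow> bool" where
  "good A \<delta> \<phi> \<longleftrightarrow> (\<exists>\<alpha> \<beta> k. pf \<alpha> \<and> pf \<beta> \<and> (\<forall>y r. NN A y \<noteq> 0 \<longrightarrow> r^2 = NN A y \<longrightarrow>
      NN A y ^ k * \<phi> (pt A y (\<delta> / r)) = \<alpha> y + \<beta> y * r))"

lemma good_const: "good A \<delta> (\<lambda>p. c)"
  unfolding good_def by (rule exI[of _ "\<lambda>p. c"], rule exI[of _ "\<lambda>p. 0"], rule exI[of _ 0]) auto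

lemma good_fst: "good A \<delta> fst"
  unfolding good_def
proof (rule exI[of _ "\<lambda>y. NN A y * fst y"], rule exI[of _ "\<lambda>y. \<delta> * (fst y - fst A)"], rule exI[of _ 1],
    intro conjI allI impI)
  show "pf (\<lambda>y. NN A y * fst y)" by (intro pf_mult pf_NN pf_fst)
  show "pf (\<lambda>y. \<delta> * (fst y - fst A))" by (intro pf_mult pf_diff pf_fst pf_const)
  fix y r assume "NN A y \<noteq> 0" "r^2 = NN A y"
  then have "r \<noteq> 0" by auto
  show "NN A y ^ 1 * fst (pt A y (\<delta> / r)) = NN A y * fst y + \<delta> * (fst y - fst A) * r"
    unfolding \<open>r^2 = NN A y\<close>[symmetric] using \<open>r \<noteq> 0\<close>
    by (simp add: pt_def field_simps power2_eq_square)
qed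

lemma good_snd: "good A \<delta> snd"
  unfolding good_def
proof (rule exI[of _ "\<lambda>y. NN A y * snd y"], rule exI[of _ "\<lambda>y. \<delta> * (snd y - snd A)"], rule exI[of _ 1],
    intro conjI allI impI)
  show "pf (\<lambda>y. NN A y * snd y)" by (intro pf_mult pf_NN pf_snd)
  show "pf (\<lambda>y. \<delta> * (snd y - snd A))" by (intro pf_mult pf_diff pf_snd pf_const)
  fix y r assume "NN A y \<noteq> 0" "r^2 = NN A y"
  then have "r \<noteq> 0" by auto
  show "NN A y ^ 1 * snd (pt A y (\<delta> / r)) = NN A y * snd y + \<delta> * (snd y - snd A) * r"
    unfolding \<open>r^2 = NN A y\<close>[symmetric] using \<open>r \<noteq> 0\<close>
    by (simp add: pt_def field_simps power2_eq_square)
qed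

lemma good_add:
  assumes "good A \<delta> \<phi>" "good A \<delta> \<psi>" shows "good A \<delta> (\<lambda>p. \<phi> p + \<psi> p)"
proof -
  obtain \<alpha>1 \<beta>1 k1 where 1: "pf \<alpha>1" "pf \<beta>1" "\<And>y r. NN A y \<noteq> 0 \<Longrightarrow> r^2 = NN A y \<Longrightarrow>
      NN A y ^ k1 * \<phi> (pt A y (\<delta> / r)) = \<alpha>1 y + \<beta>1 y * r" using assms(1) unfolding good_def by blast
  obtain \<alpha>2 \<beta>2 k2 where 2: "pf \<alpha>2" "pf \<beta>2" "\<And>y r. NN A y \<noteq> 0 \<Longrightarrow> r^2 = NN A y \<Longrightarrow>
      NN A y ^ k2 * \<psi> (pt A y (\<delta> / r)) = \<alpha>2 y + \<beta>2 y * r" using assms(2) unfolding good_def by blast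
  show ?thesis unfolding good_def
  proof (rule exI[of _ "\<lambda>y. NN A y ^ k2 * \<alpha>1 y + NN A y ^ k1 * \<alpha>2 y"],
      rule exI[of _ "\<lambda>y. NN A y ^ k2 * \<beta>1 y + NN A y ^ k1 * \<beta>2 y"], rule exI[of _ "k1 + k2"],
      intro conjI allI impI)
    show "pf (\<lambda>y. NN A y ^ k2 * \<alpha>1 y + NN A y ^ k1 * \<alpha>2 y)" using 1 2 by (intro pf_add pf_mult pf_power pf_NN)
    show "pf (\<lambda>y. NN A y ^ k2 * \<beta>1 y + NN A y ^ k1 * \<beta>2 y)" using 1 2 by (intro pf_add pf_mult pf_power pf_NN)
    fix y r assume h: "NN A y \<noteq> 0" "r^2 = NN A y"
    have "NN A y ^ (k1 + k2) * (\<phi> (pt A y (\<delta> / r)) + \<psi> (pt A y (\<delta> / r))) =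
        NN A y ^ k2 * (NN A y ^ k1 * \<phi> (pt A y (\<delta> / r))) + NN A y ^ k1 * (NN A y ^ k2 * \<psi> (pt A y (\<delta> / r)))"
      by (simp add: power_add algebra_simps)
    also have "\<dots> = NN A y ^ k2 * (\<alpha>1 y + \<beta>1 y * r) + NN A y ^ k1 * (\<alpha>2 y + \<beta>2 y * r)"
      using 1(3)[OF h] 2(3)[OF h] by simp
    finally show "NN A y ^ (k1 + k2) * (\<phi> (pt A y (\<delta> / r)) + \<psi> (pt A y (\<delta> / r))) =
        NN A y ^ k2 * \<alpha>1 y + NN A y ^ k1 * \<alpha>2 y + (NN A y ^ k2 * \<beta>1 y + NN A y ^ k1 * \<beta>2 y) * r"
      by (simp add: algebra_simps)
  qed
qed

lemma good_mult:
  assumes "good A \<delta> \<phi>" "good A \<delta> \<psi>" shows "good A \<delta> (\<lambda>p. \<phi> p * \<psi> p)"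
proof -
  obtain \<alpha>1 \<beta>1 k1 where 1: "pf \<alpha>1" "pf \<beta>1" "\<And>y r. NN A y \<noteq> 0 \<Longrightarrow> r^2 = NN A y \<Longrightarrow>
      NN A y ^ k1 * \<phi> (pt A y (\<delta> / r)) = \<alpha>1 y + \<beta>1 y * r" using assms(1) unfolding good_def by blast
  obtain \<alpha>2 \<beta>2 k2 where 2: "pf \<alpha>2" "pf \<beta>2" "\<And>y r. NN A y \<noteq> 0 \<Longrightarrow> r^2 = NN A y \<Longrightarrow>
      NN A y ^ k2 * \<psi> (pt A y (\<delta> / r)) = \<alpha>2 y + \<beta>2 y * r" using assms(2) unfolding good_def by blast
  show ?thesis unfolding good_def
  proof (rule exI[of _ "\<lambda>y. \<alpha>1 y * \<alpha>2 y + \<beta>1 y * \<beta>2 y * NN A y"],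
      rule exI[of _ "\<lambda>y. \<alpha>1 y * \<beta>2 y + \<beta>1 y * \<alpha>2 y"], rule exI[of _ "k1 + k2"],
      intro conjI allI impI)
    show "pf (\<lambda>y. \<alpha>1 y * \<alpha>2 y + \<beta>1 y * \<beta>2 y * NN A y)" using 1 2 by (intro pf_add pf_mult pf_NN)
    show "pf (\<lambda>y. \<alpha>1 y * \<beta>2 y + \<beta>1 y * \<alpha>2 y)" using 1 2 by (intro pf_add pf_mult)
    fix y r assume h: "NN A y \<noteq> 0" "r^2 = NN A y"
    have "NN A y ^ (k1 + k2) * (\<phi> (pt A y (\<delta> / r)) * \<psi> (pt A y (\<delta> / r))) =
        (NN A y ^ k1 * \<phi> (pt A y (\<delta> / r))) * (NN A y ^ k2 * \<psi> (pt A y (\<delta> / r)))"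
      by (simp add: power_add algebra_simps)
    also have "\<dots> = (\<alpha>1 y + \<beta>1 y * r) * (\<alpha>2 y + \<beta>2 y * r)"
      using 1(3)[OF h] 2(3)[OF h] by simp
    also have "\<dots> = \<alpha>1 y * \<alpha>2 y + \<beta>1 y * \<beta>2 y * r^2 + (\<alpha>1 y * \<beta>2 y + \<beta>1 y * \<alpha>2 y) * r"
      by (simp add: power2_eq_square algebra_simps)
    finally show "NN A y ^ (k1 + k2) * (\<phi> (pt A y (\<delta> / r)) * \<psi> (pt A y (\<delta> / r))) =
        \<alpha>1 y * \<alpha>2 y + \<beta>1 y * \<beta>2 y * NN A y + (\<alpha>1 y * \<beta>2 y + \<beta>1 y * \<alpha>2 y) * r"
      using h(2) by simp
  qed
qed

lemma good_poly: "good A \<delta> (eval2 f)"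
  by (rule pf_induct) (auto intro: good_const good_fst good_snd good_add good_mult)

lemma closure_transfer:
  fixes A :: "'a::{alg_closed_field, field_char_0} \<times> 'a"
  assumes y: "y \<in> zclosure E" "NN A y \<noteq> 0" and E: "\<And>z. z \<in> E \<Longrightarrow> NN A z \<noteq> 0"
    and q: "Q A \<delta> x y" and d: "\<delta> \<noteq> 0"
  shows "x \<in> zclosure (PP E A \<delta>)"
proof (rule zclosureI)
  fix f assume van: "\<And>q. q \<in> PP E A \<delta> \<Longrightarrow> eval2 f q = 0"
  obtain \<alpha> \<beta> k where ab: "pf \<alpha>" "pf \<beta>"
    "\<And>y r. NN A y \<noteq> 0 \<Longrightarrow> r^2 = NN A y \<Longrightarrow> NN A y ^ k * eval2 f (pt A y (\<delta> / r)) = \<alpha> y + \<beta> y * r"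
    using good_poly[of A \<delta> f] unfolding good_def by blast
  have vanE: "\<alpha> z = 0 \<and> \<beta> z = 0" if zE: "z \<in> E" for z
  proof -
    have nz: "NN A z \<noteq> 0" using E zE by blast
    obtain r where r: "r^2 = NN A z" using nth_root_exists[of 2 "NN A z"] by auto
    have "r \<noteq> 0" using r nz by auto
    have m1: "pt A z (\<delta> / r) \<in> PP E A \<delta>" using Q_pt_r[OF r nz] zE nz by (auto simp: PP_def)
    have r2: "(-r)^2 = NN A z" using r by simp
    have m2: "pt A z (\<delta> / (-r)) \<in> PP E A \<delta>" using Q_pt_r[OF r2 nz] zE nz by (auto simp: PP_def)
    have e1: "\<alpha> z + \<beta> z * r = 0" using ab(3)[OF nz r] van[OF m1] by simp
    have e2: "\<alpha> z - \<beta> z * r = 0" using ab(3)[OF nz r2] van[OF m2] by simp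
    have "2 * \<alpha> z = 0" using e1 e2 by (simp add: algebra_simps)
    then have "\<alpha> z = 0" by simp
    then have "\<beta> z * r = 0" using e1 by simp
    then show ?thesis using \<open>r \<noteq> 0\<close> \<open>\<alpha> z = 0\<close> by simp
  qed
  have "\<alpha> y = 0" using zclosure_pf[OF y(1) ab(1)] vanE by blast
  moreover have "\<beta> y = 0" using zclosure_pf[OF y(1) ab(2)] vanE by blast
  moreover obtain r where r: "r^2 = NN A y" "x = pt A y (\<delta> / r)" using par_r[OF y(2) d q] by blast
  ultimately have "NN A y ^ k * eval2 f x = 0" using ab(3)[OF y(2) r(1)] by simp
  then show "eval2 f x = 0" using y(2) by simp
qed

lemma exists_avoid:
  fixes S :: "'a::field_char_0 set"
  assumes "finite S" shows "\<exists>x. x \<notin> S"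
  using ex_new_if_finite[OF infinite_UNIV_char_0 assms] by blast

lemma good_point:
  fixes q :: "'a::{alg_closed_field, field_char_0} poly poly"
  assumes irr: "irreducible q"
  shows "\<exists>x0. NN A x0 \<noteq> 0 \<and> (\<forall>\<rho>. \<rho>^2 = NN A x0 \<longrightarrow> eval2 q (pt A x0 (\<delta> / \<rho>)) \<noteq> 0)"
proof -
  obtain a b where A: "A = (a, b)" by (cases A)
  show ?thesis
  proof (cases "poly q [:b:] = 0")
    case False
    define h where "h = poly q [:b:]"
    have h: "eval2 q (t, b) = poly h t" for t by (simp add: h_def eval2_alt)
    have fin: "finite {t. poly h t = 0}" using False unfolding h_def by (rule poly_roots_finite)
    define B where "B = {0} \<union> (\<lambda>t. t - a - \<delta>) ` {t. poly h t = 0} \<union> (\<lambda>t. t - a + \<delta>) ` {t. poly h t = 0}"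
    have "finite B" using fin unfolding B_def by simp
    then obtain l where l: "l \<notin> B" using exists_avoid by blast
    have "0 \<in> B" by (simp add: B_def)
    then have l0: "l \<noteq> 0" using l by blast
    define x0 where "x0 = (a + l, b)"
    have N: "NN A x0 = l^2" by (simp add: NN_def A x0_def)
    show ?thesis
    proof (intro exI[of _ x0] conjI allI impI)
      show "NN A x0 \<noteq> 0" using N l0 by simp
      fix \<rho> assume "\<rho>^2 = NN A x0"
      then have "\<rho> = l \<or> \<rho> = -l" using N by (simp add: power2_eq_iff)
      then show "eval2 q (pt A x0 (\<delta> / \<rho>)) \<noteq> 0"
      proof
        assume "\<rho> = l"
        have "pt A x0 (\<delta> / \<rho>) = (a + l + \<delta>, b)" unfolding \<open>\<rho> = l\<close> using l0 by (simp add: pt_def A x0_def)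
        moreover have "poly h (a + l + \<delta>) \<noteq> 0"
        proof
          assume "poly h (a + l + \<delta>) = 0"
          then have "l \<in> (\<lambda>t. t - a - \<delta>) ` {t. poly h t = 0}" by (intro image_eqI[of _ _ "a + l + \<delta>"]) simp_all
          then have "l \<in> B" unfolding B_def by blast
          then show False using l by blast
        qed
        ultimately show ?thesis using h by simp
      next
        assume "\<rho> = -l"
        have "pt A x0 (\<delta> / \<rho>) = (a + l - \<delta>, b)" unfolding \<open>\<rho> = -l\<close> using l0 by (simp add: pt_def A x0_def)
        moreover have "poly h (a + l - \<delta>) \<noteq> 0"
        proof
          assume "poly h (a + l - \<delta>) = 0"
          then have "l \<in> (\<lambda>t. t - a + \<delta>) ` {t. poly h t = 0}" by (intro image_eqI[of _ _ "a + l - \<delta>"]) simp_all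
          then have "l \<in> B" unfolding B_def by blast
          then show False using l by blast
        qed
        ultimately show ?thesis using h by simp
      qed
    qed
  next
    case True
    then have "[:-[:b:], 1:] dvd q" by (simp add: poly_eq_0_iff_dvd)
    then obtain u where u: "q = [:-[:b:], 1:] * u" by blast
    have "\<not> is_unit [:-[:b:], 1:]" by (simp add: is_unit_poly_iff)
    then have "is_unit u" using irreducibleD[OF irr u] by blast
    then obtain c where c: "u = [:[:c:]:]" "c \<noteq> 0" by (auto simp: is_unit_poly_iff dvd_field_iff)
    have ev: "eval2 q p = (snd p - b) * c" for p using u c by (simp add: eval2_alt' algebra_simps)
    define B where "B = {0, \<delta>, -\<delta>}"
    obtain l where l: "l \<notin> B" using exists_avoid[of B] by (auto simp: B_def)
    have "0 \<in> B" by (simp add: B_def)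
    then have l0: "l \<noteq> 0" using l by blast
    define x0 where "x0 = (a, b + l)"
    have N: "NN A x0 = l^2" by (simp add: NN_def A x0_def)
    show ?thesis
    proof (intro exI[of _ x0] conjI allI impI)
      show "NN A x0 \<noteq> 0" using N l0 by simp
      fix \<rho> assume "\<rho>^2 = NN A x0"
      then have "\<rho> = l \<or> \<rho> = -l" using N by (simp add: power2_eq_iff)
      then have "snd (pt A x0 (\<delta> / \<rho>)) - b = l + \<delta> \<or> snd (pt A x0 (\<delta> / \<rho>)) - b = l - \<delta>"
        using l0 by (auto simp: pt_def A x0_def)
      moreover have "l + \<delta> \<noteq> 0" "l - \<delta> \<noteq> 0" using l by (auto simp: B_def add_eq_0_iff)
      ultimately show "eval2 q (pt A x0 (\<delta> / \<rho>)) \<noteq> 0" using ev c by auto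
    qed
  qed
qed

lemma proper:
  fixes q :: "'a::{alg_closed_field, field_char_0} poly poly"
  assumes irr: "irreducible q" and D: "D \<subseteq> zero_set q" and d: "\<delta> \<noteq> 0"
  shows "\<exists>H. H \<noteq> 0 \<and> PP D A \<delta> \<subseteq> zero_set H"
proof -
  obtain \<alpha> \<beta> k where ab: "pf \<alpha>" "pf \<beta>"
    "\<And>y r. NN A y \<noteq> 0 \<Longrightarrow> r^2 = NN A y \<Longrightarrow> NN A y ^ k * eval2 q (pt A y (\<delta> / r)) = \<alpha> y + \<beta> y * r"
    using good_poly[of A \<delta> q] unfolding good_def by blast
  have "pf (\<lambda>x. NN A x * (\<alpha> x ^ 2 - \<beta> x ^ 2 * NN A x))" using ab by (intro pf_mult pf_diff pf_power pf_NN)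
  then obtain H where Hd: "(\<lambda>x. NN A x * (\<alpha> x ^ 2 - \<beta> x ^ 2 * NN A x)) = eval2 H"
    unfolding pf_def by blast
  have H: "\<And>x. eval2 H x = NN A x * (\<alpha> x ^ 2 - \<beta> x ^ 2 * NN A x)"
    using fun_cong[OF Hd] by simp
  have sub: "PP D A \<delta> \<subseteq> zero_set H"
  proof
    fix x assume "x \<in> PP D A \<delta>"
    then obtain y where y: "y \<in> D" "NN A y \<noteq> 0" "Q A \<delta> x y" by (auto simp: PP_def)
    show "x \<in> zero_set H"
    proof (cases "NN A x = 0")
      case True then show ?thesis by (simp add: H)
    next
      case False
      have "Q A \<delta> y x" using y(3) Q_sym by blast
      then obtain \<rho> where \<rho>: "\<rho>^2 = NN A x" "y = pt A x (\<delta> / \<rho>)" using par_r[OF False d] by blast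
      have "eval2 q y = 0" using y(1) D by auto
      then have "\<alpha> x + \<beta> x * \<rho> = 0" using ab(3)[OF False \<rho>(1)] \<rho>(2) by simp
      then have "\<alpha> x = - \<beta> x * \<rho>" by (simp add: eq_neg_iff_add_eq_0)
      then have "\<alpha> x ^ 2 = \<beta> x ^ 2 * NN A x" using \<rho>(1) by (simp add: power_mult_distrib)
      then show ?thesis by (simp add: H)
    qed
  qed
  obtain x0 where x0: "NN A x0 \<noteq> 0" "\<And>\<rho>. \<rho>^2 = NN A x0 \<Longrightarrow> eval2 q (pt A x0 (\<delta> / \<rho>)) \<noteq> 0"
    using good_point[OF irr, of A \<delta>] by blast
  obtain \<rho> where \<rho>: "\<rho>^2 = NN A x0" using nth_root_exists[of 2 "NN A x0"] by auto
  have \<rho>': "(-\<rho>)^2 = NN A x0" using \<rho> by simp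
  have "NN A x0 ^ k * eval2 q (pt A x0 (\<delta> / \<rho>)) \<noteq> 0" using x0(1) x0(2)[OF \<rho>] by simp
  then have "\<alpha> x0 + \<beta> x0 * \<rho> \<noteq> 0" using ab(3)[OF x0(1) \<rho>] by simp
  moreover
  have neq: "NN A x0 ^ k * eval2 q (pt A x0 (\<delta> / (-\<rho>))) \<noteq> 0" using x0(1) x0(2)[OF \<rho>'] by simp
  have "\<alpha> x0 + \<beta> x0 * (-\<rho>) \<noteq> 0" using neq unfolding ab(3)[OF x0(1) \<rho>'] .
  ultimately have "(\<alpha> x0 + \<beta> x0 * \<rho>) * (\<alpha> x0 - \<beta> x0 * \<rho>) \<noteq> 0" by simp
  moreover have "(\<alpha> x0 + \<beta> x0 * \<rho>) * (\<alpha> x0 - \<beta> x0 * \<rho>) = \<alpha> x0 ^ 2 - \<beta> x0 ^ 2 * NN A x0"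
    using \<rho> by (simp add: power2_eq_square algebra_simps)
  ultimately have "eval2 H x0 \<noteq> 0" using x0(1) by (simp add: H)
  then have "H \<noteq> 0" by auto
  then show ?thesis using sub by blast
qed

lemma finite_roots_quad:
  fixes c \<delta> :: "'a::field"
  assumes "\<delta> \<noteq> 0" shows "finite {t. t^2 * c = \<delta>^2}"
proof -
  have "[:- (\<delta>^2), 0, c:] \<noteq> 0" using assms by simp
  then have "finite {t. poly [:- (\<delta>^2), 0, c:] t = 0}" by (rule poly_roots_finite)
  moreover have "{t. t^2 * c = \<delta>^2} = {t. poly [:- (\<delta>^2), 0, c:] t = 0}"
    by (auto simp: power2_eq_square algebra_simps)
  ultimately show ?thesis by simp
qed

lemma fiber_finite1:
  fixes A x :: "'a::field \<times> 'a"
  assumes "x \<noteq> A" "\<delta> \<noteq> 0" shows "finite {y. NN A y \<noteq> 0 \<and> Q A \<delta> x y}"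
proof -
  have "{y. NN A y \<noteq> 0 \<and> Q A \<delta> x y} \<subseteq> pt A x ` {t. t^2 * NN A x = \<delta>^2}"
  proof
    fix y assume "y \<in> {y. NN A y \<noteq> 0 \<and> Q A \<delta> x y}"
    then have "Q A \<delta> y x" using Q_sym by blast
    then obtain t where "y = pt A x t" "t^2 * NN A x = \<delta>^2" using par_t assms(1) by blast
    then show "y \<in> pt A x ` {t. t^2 * NN A x = \<delta>^2}" by blast
  qed
  then show ?thesis using finite_roots_quad[OF assms(2)] finite_subset by blast
qed

lemma fiber_finite2:
  fixes A y :: "'a::field \<times> 'a"
  assumes "NN A y \<noteq> 0" "\<delta> \<noteq> 0" shows "finite {x. Q A \<delta> x y}"
proof -
  have "{x. Q A \<delta> x y} \<subseteq> pt A y ` {t. t^2 * NN A y = \<delta>^2}"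
    using par_t NN_nz_neq[OF assms(1)] by blast
  then show ?thesis using finite_roots_quad[OF assms(2)] finite_subset by blast
qed

definition Npoly :: "'a::comm_ring_1 \<times> 'a \<Rightarrow> 'a poly poly" where
  "Npoly A = [:[:-fst A,1:]:]^2 + [:[:-snd A:],1:]^2"

lemma eval2_Npoly [simp]: "eval2 (Npoly A) p = NN A p"
  by (simp add: Npoly_def NN_def eval2_alt' algebra_simps)

definition circ :: "'a::comm_ring_1 \<times> 'a \<Rightarrow> 'a \<Rightarrow> 'a poly poly" where
  "circ A s = Npoly A - [:[:s^2:]:]"

lemma eval2_circ: "eval2 (circ A s) p = NN A p - s^2"
  by (simp add: circ_def)

lemma zero_set_circ: "zero_set (circ A s) = circle A s"
  by (auto simp: circle_def eval2_circ NN_def)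

lemma circ_explicit: "circ A s = [:[:-fst A,1:]^2 + [:(snd A)^2 - s^2:], [:-2*snd A:], 1:]"
  by (simp add: circ_def Npoly_def power2_eq_square algebra_simps)


lemma poly_poly_eval: "poly (poly f u) x = eval2 f (x, poly u x)"
  by (induction f) (simp_all add: eval2_alt)

lemma degree_circ: "degree (circ A s) = 2" and lead_circ: "lead_coeff (circ A s) = 1"
  by (simp_all add: circ_explicit)

lemma deg1_poly:
  fixes f :: "'b::comm_ring_1 poly"
  assumes "degree f = 1" shows "poly f x = coeff f 0 + coeff f 1 * x"
  using assms by (simp add: poly_altdef atMost_Suc)

lemma circ_irred:
  fixes A :: "'a::{alg_closed_field, field_char_0} \<times> 'a"
  assumes s: "s \<noteq> 0" and fh: "circ A s = f * h"
  shows "is_unit f \<or> is_unit h"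
proof (rule ccontr)
  assume nu: "\<not> (is_unit f \<or> is_unit h)"
  obtain a b where A: "A = (a, b)" by (cases A)
  have nz: "f \<noteq> 0" "h \<noteq> 0" using fh degree_circ[of A s] by auto
  have dsum: "degree f + degree h = 2" using fh degree_circ[of A s] degree_mult_eq[OF nz] by simp
  have "lead_coeff f * lead_coeff h = 1" using fh lead_circ[of A s] by (simp add: lead_coeff_mult)
  then have uf: "is_unit (lead_coeff f)" and uh: "is_unit (lead_coeff h)"
    by (auto intro: dvdI[of 1 _ "lead_coeff h"] dvdI[of 1 _ "lead_coeff f"] simp: ac_simps)
  have "degree f \<noteq> 0"
  proof
    assume "degree f = 0"
    then have "f = [:lead_coeff f:]" by (auto elim!: degree_eq_zeroE)
    moreover have "is_unit [:lead_coeff f:]" using uf by (simp add: is_unit_const_poly_iff)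
    ultimately have "is_unit f" by simp
    then show False using nu by simp
  qed
  moreover have "degree h \<noteq> 0"
  proof
    assume "degree h = 0"
    then have "h = [:lead_coeff h:]" by (auto elim!: degree_eq_zeroE)
    moreover have "is_unit [:lead_coeff h:]" using uh by (simp add: is_unit_const_poly_iff)
    ultimately have "is_unit h" by simp
    then show False using nu by simp
  qed
  ultimately have df: "degree f = 1" using dsum by linarith
  obtain c where c: "lead_coeff f = [:c:]" "c \<noteq> 0" using uf by (auto simp: is_unit_poly_iff dvd_field_iff)
  have c1: "coeff f 1 = [:c:]" using c df by simp
  define u where "u = smult (- inverse c) (coeff f 0)"
  have "poly f u = coeff f 0 + [:c:] * u" using deg1_poly[OF df] c1 by simp
  also have "\<dots> = 0" using c(2) by (simp add: u_def)
  finally have "poly (circ A s) u = 0" using fh by simp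
  then have E: "(x - a)^2 + (poly u x - b)^2 = s^2" for x
    using poly_poly_eval[of "circ A s" u x] by (simp add: eval2_circ NN_def A)
  obtain i :: 'a where i: "i^2 = -1" using nth_root_exists[of 2 "-1::'a"] by auto
  define P1 where "P1 = [:-a,1:] + smult i (u - [:b:])"
  define P2 where "P2 = [:-a,1:] - smult i (u - [:b:])"
  have "poly (P1 * P2) x = poly [:s^2:] x" for x
  proof -
    have e1: "poly P1 x = (x - a) + i * (poly u x - b)" by (simp add: P1_def)
    have e2: "poly P2 x = (x - a) - i * (poly u x - b)" by (simp add: P2_def)
    have gen: "(X + i * Y) * (X - i * Y) = X^2 - i^2 * Y^2" for X Y :: 'a
      by (simp add: power2_eq_square algebra_simps)
    have "poly (P1 * P2) x = (x - a)^2 - i^2 * (poly u x - b)^2"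
      by (simp only: poly_mult e1 e2 gen)
    also have "\<dots> = s^2" using E[of x] i by simp
    finally show ?thesis by simp
  qed
  then have "poly (P1 * P2) = poly [:s^2:]" by (rule ext)
  then have PP: "P1 * P2 = [:s^2:]" by (simp only: poly_eq_poly_eq_iff)
  have s2: "[:s^2:] \<noteq> 0" using s by simp
  have p12: "P1 \<noteq> 0" "P2 \<noteq> 0"
  proof -
    show "P1 \<noteq> 0" proof assume "P1 = 0" then show False using PP s2 by simp qed
    show "P2 \<noteq> 0" proof assume "P2 = 0" then show False using PP s2 by simp qed
  qed
  have "degree P1 + degree P2 = 0" using degree_mult_eq[OF p12] \<open>P1 * P2 = [:s^2:]\<close> by simp
  then have d0: "degree (P1 + P2) = 0" using degree_add_le_max[of P1 P2] by simp
  have "P1 + P2 = [:-a,1:] + [:-a,1:]"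
  proof -
    have gen: "(X + Y) + (X - Y) = X + X" for X Y :: "'a poly" by simp
    show ?thesis unfolding P1_def P2_def by (rule gen)
  qed
  then have "coeff (P1 + P2) 1 = 2" by simp
  then have "coeff (P1 + P2) 1 \<noteq> 0" by simp
  then have "1 \<le> degree (P1 + P2)" by (rule le_degree)
  then show False using d0 by simp
qed

lemma circle_curve:
  fixes q :: "'a::{alg_closed_field, field_char_0} poly poly"
  assumes irr: "irreducible q" and s: "s \<noteq> 0" and inf: "infinite (zero_set q \<inter> circle A s)"
  shows "zero_set q = circle A s"
proof -
  have "q dvd circ A s"
  proof (rule vanish_dvd[OF irr _ inf])
    show "zero_set q \<inter> circle A s \<subseteq> zero_set q" by blast
    fix p assume "p \<in> zero_set q \<inter> circle A s"
    then have "p \<in> zero_set (circ A s)" unfolding zero_set_circ by blast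
    then show "eval2 (circ A s) p = 0" by simp
  qed
  then obtain h where h: "circ A s = q * h" by blast
  have "\<not> is_unit q" using irr irreducible_not_unit by blast
  then have "is_unit h" using circ_irred[OF s h] by blast
  then obtain k where "h * k = 1" by (metis dvdE)
  then have "q = circ A s * k" using h by (metis mult.assoc mult_1_right)
  then have "zero_set (circ A s) \<subseteq> zero_set q" by (auto simp: zero_set_def)
  moreover have "zero_set q \<subseteq> zero_set (circ A s)" using h by (auto simp: zero_set_def)
  ultimately have "zero_set q = zero_set (circ A s)" by blast
  then show ?thesis unfolding zero_set_circ .
qed

lemma factor_zero_sets:
  fixes H :: "'a::{alg_closed_field, field_char_0} poly poly"
  assumes "H \<noteq> 0"
  shows "\<exists>F. finite F \<and> (\<forall>p\<in>F. irreducible p) \<and> zero_set H = (\<Union>p\<in>F. zero_set p)"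
  using assms
proof (induction "msize H" arbitrary: H rule: less_induct)
  case (less H)
  show ?case
  proof (cases "irreducible H")
    case True then show ?thesis by (intro exI[of _ "{H}"]) auto
  next
    case False
    show ?thesis
    proof (cases "is_unit H")
      case True
      then obtain c where "H = [:c:]" "is_unit c" by (auto simp: is_unit_poly_iff)
      then obtain c0 where "H = [:[:c0:]:]" "c0 dvd 1" by (auto simp: is_unit_poly_iff)
      then have "zero_set H = {}" by auto
      then show ?thesis by (intro exI[of _ "{}"]) auto
    next
      case nu: False
      then obtain a b where ab: "H = a * b" "\<not> is_unit a" "\<not> is_unit b"
        using False less.prems(1) unfolding irreducible_def by auto
      have nz: "a \<noteq> 0" "b \<noteq> 0" using ab(1) less.prems(1) by auto
      have "msize a \<noteq> 0" using msize_0_unit[OF nz(1)] ab(2) by blast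
      moreover have "msize b \<noteq> 0" using msize_0_unit[OF nz(2)] ab(3) by blast
      ultimately have lt: "msize a < msize H" "msize b < msize H" using msize_mult[OF nz] ab(1) by simp_all
      obtain Fa where Fa: "finite Fa" "\<forall>p\<in>Fa. irreducible p" "zero_set a = (\<Union>p\<in>Fa. zero_set p)"
        using less.hyps[OF lt(1) nz(1)] by blast
      obtain Fb where Fb: "finite Fb" "\<forall>p\<in>Fb. irreducible p" "zero_set b = (\<Union>p\<in>Fb. zero_set p)"
        using less.hyps[OF lt(2) nz(2)] by blast
      have "zero_set H = zero_set a \<union> zero_set b" using ab(1) by (auto simp: zero_set_def)
      also have "\<dots> = (\<Union>p\<in>Fa \<union> Fb. zero_set p)" unfolding Fa(3) Fb(3) by blast
      finally have "zero_set H = (\<Union>p\<in>Fa \<union> Fb. zero_set p)" .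
      moreover have "finite (Fa \<union> Fb)" using Fa(1) Fb(1) by blast
      moreover have "\<forall>p\<in>Fa \<union> Fb. irreducible p" using Fa(2) Fb(2) by blast
      ultimately show ?thesis by blast
    qed
  qed
qed

lemma zclosed_finite_UN:
  fixes X :: "'b \<Rightarrow> ('a::idom \<times> 'a) set"
  assumes "finite I" "\<And>i. i \<in> I \<Longrightarrow> zclosed (X i)" shows "zclosed (\<Union>i\<in>I. X i)"
  using assms
proof (induction rule: finite_induct)
  case empty then show ?case by auto
next
  case (insert k J) then show ?case using zclosed_Un[of "X k"] by auto
qed

lemma noniso_eq: "nonisotropic_part D A = {y\<in>D. NN A y \<noteq> 0}"
  by (auto simp: nonisotropic_part_def NN_def)

lemma struct_conchoid:
  fixes q :: "'a::{alg_closed_field, field_char_0} poly poly" and A :: "'a \<times> 'a"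
  assumes irr: "irreducible q" and D: "D = zero_set q" and d: "\<delta> \<noteq> 0"
    and D0: "nonisotropic_part D A \<noteq> {}" and nc: "D \<noteq> circle A \<delta>"
    and M: "irred_component M (conchoid D A \<delta>)"
  shows "\<exists>q'. irreducible q' \<and> M = zero_set q' \<and> infinite (M \<inter> PP D A \<delta>)"
proof -
  define P where "P = PP D A \<delta>"
  have W: "conchoid D A \<delta> = zclosure P" by (simp add: P_def conchoid_PP)
  have "D \<subseteq> zero_set q" using D by simp
  then obtain H where H: "H \<noteq> 0" "P \<subseteq> zero_set H" using proper[OF irr _ d, of D A] unfolding P_def by blast
  obtain F where F: "finite F" "\<forall>p\<in>F. irreducible p" "zero_set H = (\<Union>p\<in>F. zero_set p)"
    using factor_zero_sets[OF H(1)] by blast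
  define I where "I = {p\<in>F. infinite (P \<inter> zero_set p)}"
  define Winf where "Winf = (\<Union>p\<in>I. zero_set p)"
  have I_fin: "finite I" using F(1) by (simp add: I_def)
  have Winf_closed: "zclosed Winf" unfolding Winf_def by (rule zclosed_finite_UN[OF I_fin]) auto
  define Fin where "Fin = P - Winf"
  have Fin_sub: "Fin \<subseteq> (\<Union>p\<in>F - I. P \<inter> zero_set p)"
  proof
    fix x assume x: "x \<in> Fin"
    then have xP: "x \<in> P" and xW: "x \<notin> Winf" by (auto simp: Fin_def)
    then have "x \<in> zero_set H" using H(2) by blast
    then obtain p where p: "p \<in> F" "x \<in> zero_set p" using F(3) by blast
    have "p \<notin> I" using p xW unfolding Winf_def by blast
    then show "x \<in> (\<Union>p\<in>F - I. P \<inter> zero_set p)" using p xP by blast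
  qed
  have "finite (P \<inter> zero_set p)" if "p \<in> F - I" for p using that by (simp add: I_def)
  then have "finite (\<Union>p\<in>F - I. P \<inter> zero_set p)" using F(1) by blast
  then have Fin_fin: "finite Fin" using Fin_sub finite_subset by blast
  define D0' where "D0' = {y\<in>D. NN A y \<noteq> 0}"
  have ndvd: "\<not> q dvd Npoly A"
  proof
    assume "q dvd Npoly A"
    then obtain k where k: "Npoly A = q * k" by blast
    have "NN A y = 0" if "y \<in> D" for y
    proof -
      have "eval2 q y = 0" using that D by simp
      then have "eval2 (Npoly A) y = 0" unfolding k by simp
      then show ?thesis by simp
    qed
    then show False using D0 by (auto simp: noniso_eq)
  qed
  have finN: "finite (zero_set q \<inter> zero_set (Npoly A))" by (rule finite_common_zeros[OF irr ndvd])
  have D0'_eq: "D0' = zero_set q - (zero_set q \<inter> zero_set (Npoly A))" by (auto simp: D0'_def D)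
  have D0'_inf: "infinite D0'" unfolding D0'_eq by (rule Diff_infinite_finite[OF finN infinite_zero_set[OF irr]])
  define Y where "Y = {y\<in>D0'. \<exists>x\<in>Fin. Q A \<delta> x y}"
  have fib: "finite {y\<in>D. NN A y \<noteq> 0 \<and> Q A \<delta> x y}" for x
  proof (cases "x = A")
    case False
    have "{y\<in>D. NN A y \<noteq> 0 \<and> Q A \<delta> x y} \<subseteq> {y. NN A y \<noteq> 0 \<and> Q A \<delta> x y}" by blast
    then show ?thesis using fiber_finite1[OF False d] finite_subset by blast
  next
    case True
    have sub: "{y\<in>D. NN A y \<noteq> 0 \<and> Q A \<delta> x y} \<subseteq> zero_set q \<inter> circle A \<delta>"
    proof
      fix y assume "y \<in> {y\<in>D. NN A y \<noteq> 0 \<and> Q A \<delta> x y}"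
      then have yD: "y \<in> D" and qy: "Q A \<delta> A y" using True by auto
      have "(fst y - fst A)^2 + (snd y - snd A)^2 = \<delta>^2"
        using qy unfolding Q_def by (simp add: power2_commute)
      then show "y \<in> zero_set q \<inter> circle A \<delta>" using yD D by (simp add: circle_def)
    qed
    have "finite (zero_set q \<inter> circle A \<delta>)"
    proof (rule ccontr)
      assume "infinite (zero_set q \<inter> circle A \<delta>)"
      then have "zero_set q = circle A \<delta>" using circle_curve[OF irr d] by blast
      then show False using nc D by simp
    qed
    then show ?thesis using sub finite_subset by blast
  qed
  have Y_fin: "finite Y"
  proof -
    have "Y \<subseteq> (\<Union>x\<in>Fin. {y\<in>D. NN A y \<noteq> 0 \<and> Q A \<delta> x y})" by (auto simp: Y_def D0'_def)
    moreover have "finite (\<Union>x\<in>Fin. {y\<in>D. NN A y \<noteq> 0 \<and> Q A \<delta> x y})" using Fin_fin fib by blast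
    ultimately show ?thesis using finite_subset by blast
  qed
  define E where "E = D0' - Y"
  have E_inf: "infinite E" unfolding E_def by (rule Diff_infinite_finite[OF Y_fin D0'_inf])
  have E_sub: "E \<subseteq> zero_set q" by (auto simp: E_def D0'_def D)
  have E_cl: "zclosure E = D" using dense_curve[OF irr E_sub E_inf] D by simp
  have E_nz: "\<And>z. z \<in> E \<Longrightarrow> NN A z \<noteq> 0" by (auto simp: E_def D0'_def)
  have PE_sub: "PP E A \<delta> \<subseteq> Winf"
  proof
    fix x' assume "x' \<in> PP E A \<delta>"
    then obtain y' where y': "y' \<in> E" "NN A y' \<noteq> 0" "Q A \<delta> x' y'" by (auto simp: PP_def)
    have "y' \<in> D" using y'(1) by (simp add: E_def D0'_def)
    then have x'P: "x' \<in> P" using y' unfolding P_def PP_def by blast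
    show "x' \<in> Winf"
    proof (rule ccontr)
      assume "x' \<notin> Winf"
      then have "x' \<in> Fin" using x'P by (simp add: Fin_def)
      moreover have "y' \<in> D0'" using y'(1) by (simp add: E_def)
      ultimately have "y' \<in> Y" using y'(3) unfolding Y_def by blast
      then show False using y'(1) by (simp add: E_def)
    qed
  qed
  have P_sub: "P \<subseteq> Winf"
  proof
    fix x assume "x \<in> P"
    then obtain y where y: "y \<in> D" "NN A y \<noteq> 0" "Q A \<delta> x y" by (auto simp: P_def PP_def)
    have "y \<in> zclosure E" using y(1) E_cl by simp
    then have "x \<in> zclosure (PP E A \<delta>)" using closure_transfer[OF _ y(2) E_nz y(3) d] by blast
    also have "\<dots> \<subseteq> Winf" by (rule zclosure_minimal[OF PE_sub Winf_closed])
    finally show "x \<in> Winf" .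
  qed
  have W_sub: "conchoid D A \<delta> \<subseteq> Winf" unfolding W by (rule zclosure_minimal[OF P_sub Winf_closed])
  have Mirr: "zirreducible M" and MW: "M \<subseteq> conchoid D A \<delta>"
    and Mmax: "\<And>V'. zirreducible V' \<Longrightarrow> M \<subseteq> V' \<Longrightarrow> V' \<subseteq> conchoid D A \<delta> \<Longrightarrow> V' = M"
    using M unfolding irred_component_def by blast+
  have "M \<subseteq> (\<Union>p\<in>I. zero_set p)" using MW W_sub unfolding Winf_def by blast
  then obtain p where p: "p \<in> I" "M \<subseteq> zero_set p"
    using zirreducible_sub_UN[OF I_fin Mirr, of zero_set] by blast
  have pirr: "irreducible p" using p(1) F(2) by (auto simp: I_def)
  have pinf: "infinite (P \<inter> zero_set p)" using p(1) by (simp add: I_def)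
  have "zero_set p = zclosure (P \<inter> zero_set p)" using dense_curve[OF pirr _ pinf] by auto
  also have "\<dots> \<subseteq> conchoid D A \<delta>" unfolding W by (rule zclosure_mono) blast
  finally have "zero_set p \<subseteq> conchoid D A \<delta>" .
  then have eq: "zero_set p = M" using Mmax[OF zirreducible_curve[OF pirr] p(2)] by blast
  have "infinite (M \<inter> PP D A \<delta>)" using pinf unfolding eq[symmetric] P_def by (simp add: Int_commute)
  then show ?thesis using pirr eq by blast
qed

theorem proposition2:
  fixes g :: "'a::{alg_closed_field, field_char_0} poly poly"
    and C M :: "('a \<times> 'a) set"
    and A :: "'a \<times> 'a" and d :: 'a
  assumes "irreducible g"
    and "C = zero_set g"
    and "d \<noteq> 0"
    and "nonisotropic_part C A \<noteq> {}"
    and "\<forall>r. C \<noteq> circle A r"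
    and "irred_component M (conchoid C A d)"
  shows "nonisotropic_part M A \<noteq> {} \<and>
         irred_component C (conchoid M A d) \<and>
         (\<forall>d' M'. d' \<noteq> 0 \<and> d^2 \<noteq> d'^2 \<and> irred_component M' (conchoid M A d') \<longrightarrow>
           irred_component M' (conchoid C A (d + d')) \<or> irred_component M' (conchoid C A (d - d')))"
proof -
  have nc: "C \<noteq> circle A d" using assms(5) by blast
  obtain q where q: "irreducible q" "M = zero_set q" "infinite (M \<inter> PP C A d)"
    using struct_conchoid[OF assms(1) assms(2) assms(3) assms(4) nc assms(6)] by blast
  define E where "E = {x \<in> M \<inter> PP C A d. NN A x \<noteq> 0}"
  have E_inf: "infinite E"
  proof
    assume fin: "finite E"
    have "M \<inter> PP C A d \<subseteq> insert A E"
    proof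
      fix x assume x: "x \<in> M \<inter> PP C A d"
      show "x \<in> insert A E"
      proof (cases "NN A x = 0")
        case True then show ?thesis using isotropic_PP[of x C A d] x by blast
      next
        case False then show ?thesis using x by (simp add: E_def)
      qed
    qed
    then show False using q(3) fin finite_subset by blast
  qed
  have E_M: "E \<subseteq> M" and E_nz: "\<And>x. x \<in> E \<Longrightarrow> NN A x \<noteq> 0" by (auto simp: E_def)
  have part1: "nonisotropic_part M A \<noteq> {}"
  proof -
    obtain x where "x \<in> E" using E_inf by (metis finite.emptyI ex_in_conv)
    then have "x \<in> nonisotropic_part M A" by (simp add: E_def noniso_eq)
    then show ?thesis by blast
  qed
  have C_sub: "C \<subseteq> conchoid M A d"
  proof -
    define Ys where "Ys = {y \<in> C. NN A y \<noteq> 0 \<and> (\<exists>x\<in>E. Q A d x y)}"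
    have Ys_sub: "Ys \<subseteq> PP M A d"
    proof
      fix y assume y: "y \<in> Ys"
      then obtain x where x: "x \<in> E" "Q A d x y" by (auto simp: Ys_def)
      then have "Q A d y x" using Q_sym by blast
      moreover have "x \<in> M" "NN A x \<noteq> 0" using x(1) E_M E_nz by auto
      ultimately show "y \<in> PP M A d" unfolding PP_def by blast
    qed
    have Ys_inf: "infinite Ys"
    proof
      assume fin: "finite Ys"
      have "E \<subseteq> (\<Union>y\<in>Ys. {x. Q A d x y})"
      proof
        fix x assume xE: "x \<in> E"
        then have "x \<in> PP C A d" by (simp add: E_def)
        then obtain y where y: "y \<in> C" "NN A y \<noteq> 0" "Q A d x y" by (auto simp: PP_def)
        then have "y \<in> Ys" using xE unfolding Ys_def by blast
        then show "x \<in> (\<Union>y\<in>Ys. {x. Q A d x y})" using y(3) by blast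
      qed
      moreover have "finite {x. Q A d x y}" if "y \<in> Ys" for y
        using fiber_finite2[OF _ assms(3)] that by (simp add: Ys_def)
      then have "finite (\<Union>y\<in>Ys. {x. Q A d x y})" using fin by blast
      ultimately show False using E_inf finite_subset by blast
    qed
    have "Ys \<subseteq> zero_set g" using assms(2) by (auto simp: Ys_def)
    then have "zclosure Ys = C" using dense_curve[OF assms(1) _ Ys_inf] assms(2) by simp
    moreover have "zclosure Ys \<subseteq> conchoid M A d" unfolding conchoid_PP by (rule zclosure_mono[OF Ys_sub])
    ultimately show ?thesis by blast
  qed
  have part2: "irred_component C (conchoid M A d)"
  proof -
    have "M \<subseteq> zero_set q" using q(2) by simp
    then obtain H where H: "H \<noteq> 0" "PP M A d \<subseteq> zero_set H" using proper[OF q(1) _ assms(3), of M A] by blast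
    have "conchoid M A d \<subseteq> zero_set H" unfolding conchoid_PP by (rule zclosure_minimal[OF H(2)]) auto
    then show ?thesis using component_curve[OF assms(1) _ _ H(1)] C_sub assms(2) by blast
  qed
  have Mcl: "zclosure E = M" using dense_curve[OF q(1) _ E_inf] q(2) E_M by simp
  have part3: "\<forall>d' M'. d' \<noteq> 0 \<and> d^2 \<noteq> d'^2 \<and> irred_component M' (conchoid M A d') \<longrightarrow>
           irred_component M' (conchoid C A (d + d')) \<or> irred_component M' (conchoid C A (d - d'))"
  proof (intro allI impI)
    fix d' M' assume h: "d' \<noteq> 0 \<and> d^2 \<noteq> d'^2 \<and> irred_component M' (conchoid M A d')"
    then have d'0: "d' \<noteq> 0" and d'2: "d^2 \<noteq> d'^2" and M': "irred_component M' (conchoid M A d')" by auto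
    have dp: "d + d' \<noteq> 0" "d - d' \<noteq> 0"
    proof -
      show "d + d' \<noteq> 0"
      proof
        assume "d + d' = 0" then have "d = - d'" by (simp add: eq_neg_iff_add_eq_0)
        then show False using d'2 by simp
      qed
      show "d - d' \<noteq> 0" using d'2 by auto
    qed
    have Mnc: "M \<noteq> circle A d'"
    proof
      assume Mc: "M = circle A d'"
      have "PP M A d \<subseteq> zero_set (circ A (d' + d) * circ A (d' - d))"
      proof
        fix x assume "x \<in> PP M A d"
        then obtain y where y: "y \<in> M" "NN A y \<noteq> 0" "Q A d x y" by (auto simp: PP_def)
        then obtain t where t: "x = pt A y t" "t^2 * NN A y = d^2" using par_t NN_nz_neq by blast
        have Ny: "NN A y = d'^2" using y(1) Mc by (simp add: circle_def NN_def)
        have "(t * d')^2 = d^2" using t(2) Ny by (simp add: power_mult_distrib)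
        then have td: "t * d' = d \<or> t * d' = -d" by (simp add: power2_eq_iff)
        have "NN A x = (1 + t)^2 * d'^2" using NN_pt[of A y t] t(1) Ny by simp
        also have "\<dots> = (d' + t * d')^2" by (simp add: power2_eq_square algebra_simps)
        finally have "NN A x = (d' + t * d')^2" .
        then have "NN A x = (d' + d)^2 \<or> NN A x = (d' - d)^2" using td by auto
        then show "x \<in> zero_set (circ A (d' + d) * circ A (d' - d))" by (auto simp: eval2_circ)
      qed
      then have "conchoid M A d \<subseteq> zero_set (circ A (d' + d) * circ A (d' - d))"
        unfolding conchoid_PP by (rule zclosure_minimal) auto
      then have "C \<subseteq> zero_set (circ A (d' + d)) \<union> zero_set (circ A (d' - d))" using C_sub by auto
      then have "C \<subseteq> zero_set (circ A (d' + d)) \<or> C \<subseteq> zero_set (circ A (d' - d))"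
        using zirreducible_sub_Un[OF zirreducible_curve[OF assms(1)]] assms(2) by blast
      moreover have "d' + d \<noteq> 0" "d' - d \<noteq> 0" using dp by (auto simp: add.commute)
      moreover have "infinite (zero_set g)" by (rule infinite_zero_set[OF assms(1)])
      ultimately have "zero_set g = circle A (d' + d) \<or> zero_set g = circle A (d' - d)"
        using circle_curve[OF assms(1)] assms(2) zero_set_circ by (metis inf.absorb1)
      then show False using assms(5) assms(2) by blast
    qed
    obtain q' where q': "irreducible q'" "M' = zero_set q'" "infinite (M' \<inter> PP M A d')"
      using struct_conchoid[OF q(1) q(2) d'0 part1 Mnc M'] by blast
    have sub1: "PP E A d' \<subseteq> PP C A (d + d') \<union> PP C A (d - d')"
    proof
      fix z assume "z \<in> PP E A d'"
      then obtain x where x: "x \<in> E" "NN A x \<noteq> 0" "Q A d' z x" by (auto simp: PP_def)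
      then have "x \<in> PP C A d" by (simp add: E_def)
      then obtain y where y: "y \<in> C" "NN A y \<noteq> 0" "Q A d x y" by (auto simp: PP_def)
      have "Q A (d + d') z y \<or> Q A (d - d') z y" using Q_comp[OF y(2) y(3) x(2) x(3)] .
      then show "z \<in> PP C A (d + d') \<union> PP C A (d - d')" using y(1,2) unfolding PP_def by blast
    qed
    have sub2: "PP M A d' \<subseteq> zclosure (PP E A d')"
    proof
      fix z assume "z \<in> PP M A d'"
      then obtain x where x: "x \<in> M" "NN A x \<noteq> 0" "Q A d' z x" by (auto simp: PP_def)
      have "x \<in> zclosure E" using x(1) Mcl by simp
      then show "z \<in> zclosure (PP E A d')" using closure_transfer[OF _ x(2) E_nz x(3) d'0] by blast
    qed
    have "PP M A d' \<subseteq> zclosure (PP C A (d + d') \<union> PP C A (d - d'))"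
      using sub2 zclosure_mono[OF sub1] by blast
    then have "zclosure (PP M A d') \<subseteq> zclosure (PP C A (d + d') \<union> PP C A (d - d'))"
      by (rule zclosure_minimal) auto
    then have un: "conchoid M A d' \<subseteq> conchoid C A (d + d') \<union> conchoid C A (d - d')"
      by (simp add: conchoid_PP zclosure_Un)
    have M'irr: "zirreducible M'" and M'sub: "M' \<subseteq> conchoid M A d'"
      using M' unfolding irred_component_def by blast+
    have "M' \<subseteq> conchoid C A (d + d') \<or> M' \<subseteq> conchoid C A (d - d')"
      using zirreducible_sub_Un[OF M'irr] M'sub un by (simp add: conchoid_PP zclosed_zclosure)
    moreover have "irred_component M' (conchoid C A \<delta>)" if dn: "\<delta> \<noteq> 0" and Ms: "M' \<subseteq> conchoid C A \<delta>" for \<delta>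
    proof -
      have "C \<subseteq> zero_set g" using assms(2) by simp
      then obtain H where H: "H \<noteq> 0" "PP C A \<delta> \<subseteq> zero_set H" using proper[OF assms(1) _ dn, of C A] by blast
      have "conchoid C A \<delta> \<subseteq> zero_set H" unfolding conchoid_PP by (rule zclosure_minimal[OF H(2)]) auto
      then show ?thesis using component_curve[OF q'(1) _ _ H(1)] q'(2) Ms by blast
    qed
    ultimately show "irred_component M' (conchoid C A (d + d')) \<or> irred_component M' (conchoid C A (d - d'))"
      using dp by blast
  qed
  show ?thesis using part1 part2 part3 by blast
qed

end
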